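(* Let $q$ be a prime power and $L\subset\mathbb{P}^2$ a line defined over $\mathbb{F}_q$. Let $\mathcal{T}_L$ be the set of non-constant homogeneous $f\in\mathbb{F}_q[x,y,z]$ such that the curve $C=\{f=0\}$ is not transverse to $L$. Then $\mu_d(\mathcal{T}_L)=q^{-1}+q^{-2}-q^{-3}$ for all $d\ge 3$. In particular $\mu(\mathcal{T}_L)=q^{-1}+q^{-2}-q^{-3}$.
   Context: Let $R=\mathbb{F}_q[x,y,z]$, $R_d$ the homogeneous polynomials of degree $d$ (including $0$), $\mu_d(\mathcal{A})=\#(\mathcal{A}\cap R_d)/\#R_d$ and $\mu(\mathcal{A})=\lim_{d\to\infty}\mu_d(\mathcal{A})$. For $f\in R_d$, $C=\{f=0\}$ is not transverse to $L$ if the restriction of $f$ to $L$ (a binary form of degree $d$ after choosing coordinates on $L\cong\mathbb{P}^1$) has a repeated root over $\overline{\mathbb{F}}_q$ or is identically zero; equivalently, $L$ does not meet $C$ in $d$ distinct points (it is tangent to $C$, passes through a singular point of $C$, or is contained in $C$). *)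

theory Defs
  imports "HOL-Analysis.Analysis" "HOL-Algebra.Algebraic_Closure_Type"
begin

text \<open>Homogeneous polynomials of degree d in F[x,y,z] are represented by their
  coefficient functions on exponent triples (i,j,k), supported on i+j+k = d.\<close>

definition mono3 :: "nat \<Rightarrow> (nat \<times> nat \<times> nat) set" where
  "mono3 d = {(i,j,k). i + j + k = d}"

definition hom_forms :: "nat \<Rightarrow> ((nat \<times> nat \<times> nat) \<Rightarrow> 'a::field) set" where
  "hom_forms d = {f. \<forall>m. m \<notin> mono3 d \<longrightarrow> f m = 0}"

definition eval3 :: "nat \<Rightarrow> ((nat \<times> nat \<times> nat) \<Rightarrow> 'a::field)
    \<Rightarrow> 'a alg_closure \<times> 'a alg_closure \<times> 'a alg_closure \<Rightarrow> 'a alg_closure" where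
  "eval3 d f p = (case p of (x,y,z) \<Rightarrow>
     (\<Sum>(i,j,k)\<in>mono3 d. to_ac (f (i,j,k)) * x ^ i * y ^ j * z ^ k))"

text \<open>Normalized representatives of points of the projective plane:
  first nonzero coordinate equal to 1.\<close>
definition proj_norm :: "'b::field \<times> 'b \<times> 'b \<Rightarrow> bool" where
  "proj_norm p = (case p of (x,y,z) \<Rightarrow>
     x = 1 \<or> (x = 0 \<and> y = 1) \<or> (x = 0 \<and> y = 0 \<and> z = 1))"

definition line_curve_pts :: "nat \<Rightarrow> 'a::field \<times> 'a \<times> 'a \<Rightarrow> ((nat \<times> nat \<times> nat) \<Rightarrow> 'a)
    \<Rightarrow> ('a alg_closure \<times> 'a alg_closure \<times> 'a alg_closure) set" where
  "line_curve_pts d l f = (case l of (a,b,c) \<Rightarrow>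
     {(x,y,z). proj_norm (x,y,z) \<and> to_ac a * x + to_ac b * y + to_ac c * z = 0
               \<and> eval3 d f (x,y,z) = 0})"

definition transverse :: "nat \<Rightarrow> 'a::field \<times> 'a \<times> 'a \<Rightarrow> ((nat \<times> nat \<times> nat) \<Rightarrow> 'a) \<Rightarrow> bool" where
  "transverse d l f \<longleftrightarrow> finite (line_curve_pts d l f) \<and> card (line_curve_pts d l f) = d"

text \<open>T_L: non-constant homogeneous polynomials (the zero polynomial lies in every R_d)
  whose curve is not transverse to L.\<close>
definition nontransverse_set :: "'a::field \<times> 'a \<times> 'a \<Rightarrow> ((nat \<times> nat \<times> nat) \<Rightarrow> 'a) set" where
  "nontransverse_set l = {f. \<exists>d. d \<ge> 1 \<and> f \<in> hom_forms d \<and> \<not> transverse d l f}"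

definition mu_d :: "nat \<Rightarrow> ((nat \<times> nat \<times> nat) \<Rightarrow> 'a::{finite,field}) set \<Rightarrow> real" where
  "mu_d d A = real (card (A \<inter> hom_forms d)) / real (card (hom_forms d :: ((nat \<times> nat \<times> nat) \<Rightarrow> 'a) set))"

end

theory Submission
  imports Defs
begin

abbreviation TA :: "'a::field poly \<Rightarrow> 'a alg_closure poly" where
  "TA p \<equiv> map_poly to_ac p"

lemma coeff_TA [simp]: "Polynomial.coeff (TA p) n = to_ac (Polynomial.coeff p n)"
  by (simp add: coeff_map_poly)

lemma TA_add [simp]: "TA (p + q) = TA p + TA q"
  by (rule poly_eqI) simp

lemma TA_diff [simp]: "TA (p - q) = TA p - TA q"
  by (rule poly_eqI) simp

lemma TA_mult [simp]: "TA (p * q) = TA p * TA q"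
  by (rule poly_eqI) (simp add: coeff_mult to_ac_sum)

lemma TA_one [simp]: "TA 1 = 1"
  by simp

lemma TA_power [simp]: "TA (p ^ n) = TA p ^ n"
  by (induction n) simp_all

lemma TA_pderiv [simp]: "TA (pderiv p) = pderiv (TA p)"
  by (rule poly_eqI) (simp add: coeff_pderiv)

lemma TA_pCons [simp]: "TA (pCons a p) = pCons (to_ac a) (TA p)"
  by (simp add: map_poly_pCons)

lemma TA_smult [simp]: "TA (Polynomial.smult c p) = Polynomial.smult (to_ac c) (TA p)"
  by (rule poly_eqI) simp

lemma TA_eq_0_iff [simp]: "TA p = 0 \<longleftrightarrow> p = 0"
  by (metis coeff_TA leading_coeff_0_iff to_ac_eq_0_iff coeff_0 poly_eqI)

lemma degree_TA [simp]: "Polynomial.degree (TA p) = Polynomial.degree p"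
  by (cases "p = 0") (simp_all add: map_poly_degree_eq)

lemma TA_dvd: "p dvd q \<Longrightarrow> TA p dvd TA q"
  by (metis TA_mult dvd_def)

lemma alg_closed_infinite: "infinite (UNIV :: 'b::alg_closed_field set)"
proof
  assume fin: "finite (UNIV :: 'b set)"
  define p :: "'b poly" where "p = (\<Prod>a\<in>UNIV. [:-a,1:]) + 1"
  have dg: "Polynomial.degree (\<Prod>a\<in>(UNIV::'b set). [:-a,1:]) = card (UNIV :: 'b set)"
    by (subst degree_prod_eq_sum_degree) (auto simp: fin)
  have "card (UNIV :: 'b set) > 0" using fin by (simp add: finite_UNIV_card_ge_0)
  hence "Polynomial.degree p > 0" unfolding p_def using dg
    by (metis add.commute degree_add_eq_left degree_1)
  then obtain x where "poly p x = 0" using alg_closed_imp_poly_has_root by blast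
  moreover have "poly (\<Prod>a\<in>(UNIV::'b set). [:-a,1:]) x = 0"
    by (simp add: poly_prod fin)
  ultimately show False by (simp add: p_def)
qed


lemma prime_CHAR_fin: "Factorial_Ring.prime CHAR('a::{finite,field})"
  using prime_CHAR_semidom[where 'a='a] finite_imp_CHAR_pos[where 'a='a] by auto

lemma frob_surj: fixes c :: "'a::{finite,field}" shows "\<exists>e. e ^ CHAR('a) = c"
proof -
  let ?P = "CHAR('a)"
  have pr: "Factorial_Ring.prime ?P" by (rule prime_CHAR_fin)
  have "inj (\<lambda>x::'a. x ^ ?P)"
  proof (rule injI)
    fix x y :: 'a assume "x ^ ?P = y ^ ?P"
    moreover have "(x + (- y)) ^ ?P = x ^ ?P + (- y) ^ ?P"
      by (rule freshmans_dream[OF pr refl])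
    moreover have "(- y) ^ ?P = - (y ^ ?P)"
      by (rule minus_power_prime_CHAR[OF refl pr])
    ultimately have "(x - y) ^ ?P = 0" by simp
    thus "x = y" by simp
  qed
  hence "surj (\<lambda>x::'a. x ^ ?P)" by (simp add: finite_UNIV_inj_surj)
  thus ?thesis by (metis surjD)
qed

lemma pderiv_0_imp_power:
  fixes p :: "'a::{finite,field} poly"
  assumes "pderiv p = 0"
  shows "\<exists>g. p = g ^ CHAR('a)"
proof -
  let ?P = "CHAR('a)"
  have pr: "Factorial_Ring.prime ?P" by (rule prime_CHAR_fin)
  have P1: "?P > 1" using pr prime_gt_1_nat by blast
  have dv: "Polynomial.coeff p k \<noteq> 0 \<Longrightarrow> ?P dvd k" for k
  proof (cases k)
    case (Suc n)
    assume nz: "Polynomial.coeff p k \<noteq> 0"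
    have "of_nat k * Polynomial.coeff p k = 0"
      using arg_cong[OF assms, of "\<lambda>q. Polynomial.coeff q n"] Suc by (simp add: coeff_pderiv)
    hence "of_nat k = (0::'a)" using nz by simp
    thus ?thesis using of_nat_eq_0_iff_char_dvd by blast
  qed simp
  define r where "r = (\<lambda>c::'a. SOME e. e ^ ?P = c)"
  have r: "r c ^ ?P = c" for c unfolding r_def by (rule someI_ex, rule frob_surj)
  define D where "D = Polynomial.degree p"
  define g where "g = (\<Sum>j\<le>D. Polynomial.monom (r (Polynomial.coeff p (j * ?P))) j)"
  have "g ^ ?P = (\<Sum>j\<le>D. Polynomial.monom (r (Polynomial.coeff p (j * ?P))) j ^ ?P)"
    unfolding g_def by (rule freshmans_dream_sum) (simp_all add: pr)
  also have "\<dots> = (\<Sum>j\<le>D. Polynomial.monom (Polynomial.coeff p (j * ?P)) (j * ?P))"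
    by (simp add: monom_power r)
  also have "\<dots> = p"
  proof (rule poly_eqI)
    fix n
    show "Polynomial.coeff (\<Sum>j\<le>D. Polynomial.monom (Polynomial.coeff p (j * ?P)) (j * ?P)) n = Polynomial.coeff p n"
    proof (cases "?P dvd n")
      case True
      then obtain m where m: "n = m * ?P" by (metis dvd_def mult.commute)
      have inj: "j * ?P = n \<longleftrightarrow> j = m" for j using P1 m by auto
      show ?thesis
      proof (cases "m \<le> D")
        case True
        moreover have "CHAR('a) \<noteq> 0" using P1 by simp
        ultimately show ?thesis by (simp add: coeff_sum m)
      next
        case False
        hence "n > D" using m P1
          by (metis dual_order.strict_trans1 less_one linorder_not_le mult.right_neutral
              mult_le_mono2 nat_less_le)
        hence "Polynomial.coeff p n = 0" unfolding D_def by (simp add: coeff_eq_0)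
        thus ?thesis using False by (simp add: coeff_sum inj)
      qed
    next
      case False
      hence "Polynomial.coeff p n = 0" using dv by blast
      moreover have "j * ?P \<noteq> n" for j using False by auto
      ultimately show ?thesis by (simp add: coeff_sum)
    qed
  qed
  finally show ?thesis by metis
qed

lemma irreducible_pderiv_nz:
  fixes p :: "'a::{finite,field} poly"
  assumes "Factorial_Ring.irreducible p"
  shows "pderiv p \<noteq> 0"
proof
  assume "pderiv p = 0"
  then obtain g where g: "p = g ^ CHAR('a)" using pderiv_0_imp_power by blast
  have P1: "CHAR('a) > 1" using prime_CHAR_fin[where 'a='a] prime_gt_1_nat by blast
  then obtain k where k: "CHAR('a) = Suc (Suc k)" by (metis less_imp_Suc_add plus_1_eq_Suc add_Suc_right)
  have "p = g * g ^ Suc k" using g k by simp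
  hence "is_unit g \<or> is_unit (g ^ Suc k)" using assms comm_semiring_1_class.irreducibleD by blast
  hence "is_unit g" by (metis is_unit_power_iff nat.simps(3))
  hence "is_unit p" using g by (simp add: is_unit_power_iff)
  thus False using assms by (simp add: comm_semiring_1_class.irreducible_def)
qed


typedef (overloaded) 'a fw = "UNIV :: 'a::field set" morphisms Rep_fw Abs_fw by simp

instantiation fw :: (field) field
begin
definition "0 = Abs_fw 0"
definition "1 = Abs_fw 1"
definition "x + y = Abs_fw (Rep_fw x + Rep_fw y)"
definition "x - y = Abs_fw (Rep_fw x - Rep_fw y)"
definition "x * y = Abs_fw (Rep_fw x * Rep_fw y)"
definition "- x = Abs_fw (- Rep_fw x)"
definition "inverse x = Abs_fw (inverse (Rep_fw x))"
definition "x div y = Abs_fw (Rep_fw x / Rep_fw y)"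
instance
  by standard (simp_all add: zero_fw_def one_fw_def plus_fw_def minus_fw_def times_fw_def
      uminus_fw_def inverse_fw_def divide_fw_def Abs_fw_inverse Rep_fw_inverse Rep_fw_inject
      algebra_simps divide_inverse flip: Rep_fw_inject)
end

instance fw :: ("{finite,field}") finite
proof
  have "(UNIV :: 'a fw set) = Abs_fw ` UNIV" by (metis Rep_fw_inverse surj_def)
  moreover have "finite (Abs_fw ` (UNIV :: 'a set))" by simp
  ultimately show "finite (UNIV :: 'a fw set)" by simp
qed

instantiation fw :: (field)
  "{unique_euclidean_ring, normalization_euclidean_semiring, normalization_semidom_multiplicative}"
begin
definition [simp]: "normalize_fw = (normalize_field :: 'a fw \<Rightarrow> _)"
definition [simp]: "unit_factor_fw = (unit_factor_field :: 'a fw \<Rightarrow> _)"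
definition [simp]: "modulo_fw = (mod_field :: 'a fw \<Rightarrow> _)"
definition [simp]: "euclidean_size_fw = (euclidean_size_field :: 'a fw \<Rightarrow> _)"
definition [simp]: "division_segment (x :: 'a fw) = 1"
instance
  by standard
    (simp_all add: dvd_field_iff field_split_simps split: if_splits)
end

instantiation fw :: (field) euclidean_ring_gcd
begin
definition gcd_fw :: "'a fw \<Rightarrow> 'a fw \<Rightarrow> 'a fw" where
  "gcd_fw = Euclidean_Algorithm.gcd"
definition lcm_fw :: "'a fw \<Rightarrow> 'a fw \<Rightarrow> 'a fw" where
  "lcm_fw = Euclidean_Algorithm.lcm"
definition Gcd_fw :: "'a fw set \<Rightarrow> 'a fw" where
 "Gcd_fw = Euclidean_Algorithm.Gcd"
definition Lcm_fw :: "'a fw set \<Rightarrow> 'a fw" where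
 "Lcm_fw = Euclidean_Algorithm.Lcm"
instance by standard (simp_all add: gcd_fw_def lcm_fw_def Gcd_fw_def Lcm_fw_def)
end

instance fw :: (field) semiring_gcd_mult_normalize ..
instance fw :: (field) field_gcd ..

lemma Abs_fw_add: "Abs_fw (x + y) = Abs_fw x + Abs_fw y"
  by (simp add: plus_fw_def Abs_fw_inverse)
lemma Abs_fw_mult: "Abs_fw (x * y) = Abs_fw x * Abs_fw y"
  by (simp add: times_fw_def Abs_fw_inverse)
lemma Abs_fw_0: "Abs_fw 0 = 0" by (simp add: zero_fw_def)
lemma Abs_fw_1: "Abs_fw 1 = 1" by (simp add: one_fw_def)
lemma Rep_fw_add: "Rep_fw (x + y) = Rep_fw x + Rep_fw y"
  by (simp add: plus_fw_def Abs_fw_inverse)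
lemma Rep_fw_mult: "Rep_fw (x * y) = Rep_fw x * Rep_fw y"
  by (simp add: times_fw_def Abs_fw_inverse)
lemma Rep_fw_0: "Rep_fw 0 = 0" by (simp add: zero_fw_def Abs_fw_inverse)
lemma Rep_fw_1: "Rep_fw 1 = 1" by (simp add: one_fw_def Abs_fw_inverse)

lemma card_fw: "CARD('a::{finite,field} fw) = CARD('a)"
  using bij_betw_same_card[of Rep_fw "UNIV :: 'a fw set" "UNIV :: 'a set"]
  by (metis Rep_fw_inverse Abs_fw_inverse UNIV_I bij_betw_byWitness subset_UNIV)


definition sqf :: "'b::field poly \<Rightarrow> bool" where
  "sqf h \<longleftrightarrow> h \<noteq> 0 \<and> (\<forall>p g. h = p^2 * g \<longrightarrow> Polynomial.degree p = 0)"

definition sep :: "'b::field poly \<Rightarrow> bool" where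
  "sep h \<longleftrightarrow> (\<exists>u v. u * h + v * pderiv h = 1)"

lemma sqf_iff_squarefree:
  fixes h :: "'k::field_gcd poly"
  shows "sqf h \<longleftrightarrow> squarefree h"
proof
  assume s: "sqf h"
  show "squarefree h"
  proof (rule squarefreeI)
    fix x assume "x^2 dvd h"
    then obtain g where g: "h = x^2 * g" by (metis dvdE)
    hence "Polynomial.degree x = 0" using s by (auto simp: sqf_def)
    moreover have "x \<noteq> 0" using g s by (auto simp: sqf_def)
    ultimately show "is_unit x" by (simp add: is_unit_iff_degree)
  qed
next
  assume s: "squarefree h"
  show "sqf h" unfolding sqf_def
  proof (intro conjI allI impI)
    show "h \<noteq> 0" using s by auto
    fix p g assume "h = p^2 * g"
    hence "is_unit p" using s squarefreeD by (metis dvd_triv_left)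
    thus "Polynomial.degree p = 0" by (metis is_unit_iff_degree not_is_unit_0)
  qed
qed

lemma degree_pderiv_less:
  fixes p :: "'a::field poly"
  assumes "pderiv p \<noteq> 0"
  shows "Polynomial.degree (pderiv p) < Polynomial.degree p"
proof -
  have "Polynomial.degree p \<noteq> 0"
  proof
    assume "Polynomial.degree p = 0"
    then obtain c where "p = [:c:]" by (metis degree_eq_zeroE)
    thus False using assms by simp
  qed
  moreover have "Polynomial.degree (pderiv p) \<le> Polynomial.degree p - 1"
    by (rule degree_le) (auto simp: coeff_pderiv coeff_eq_0)
  ultimately show ?thesis by linarith
qed

lemma squarefree_imp_sep:
  fixes h :: "'k::{finite,field_gcd} poly"
  assumes sf: "squarefree h"
  shows "sep h"
proof -
  have h0: "h \<noteq> 0" using sf by auto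
  have "coprime h (pderiv h)"
  proof (rule ccontr)
    assume "\<not> coprime h (pderiv h)"
    then obtain c where c: "c dvd h" "c dvd pderiv h" "\<not> is_unit c" by (rule not_coprimeE) blast
    have "c \<noteq> 0" using c h0 by auto
    then obtain p where p: "p dvd c" "Factorial_Ring.prime p" using prime_divisor_exists c(3) by blast
    have ph: "p dvd h" and pd: "p dvd pderiv h" using p c dvd_trans by blast+
    obtain g where g: "h = p * g" using ph by (metis dvdE)
    have "pderiv h = p * pderiv g + g * pderiv p" using g by (simp add: pderiv_mult)
    hence "p dvd g * pderiv p" using pd by (metis dvd_add_right_iff dvd_triv_left)
    hence "p dvd g \<or> p dvd pderiv p" using p(2) by (simp add: prime_dvd_mult_iff)
    thus False
    proof
      assume "p dvd g"
      hence "p^2 dvd h" using g by (simp add: power2_eq_square)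
      hence "is_unit p" using sf squarefreeD by blast
      thus False using p(2) by (simp add: prime_def)
    next
      assume pp: "p dvd pderiv p"
      have "Factorial_Ring.irreducible p" using p(2) by (simp add: prime_elem_imp_irreducible)
      hence nz: "pderiv p \<noteq> 0" by (rule irreducible_pderiv_nz)
      have "Polynomial.degree p \<le> Polynomial.degree (pderiv p)" using pp nz by (rule dvd_imp_degree_le)
      thus False using degree_pderiv_less[OF nz] by simp
    qed
  qed
  hence "gcd h (pderiv h) = 1" by simp
  hence "fst (bezout_coefficients h (pderiv h)) * h + snd (bezout_coefficients h (pderiv h)) * pderiv h = 1"
    by (metis bezout_coefficients_fst_snd)
  thus ?thesis unfolding sep_def by blast
qed


definition Bp :: "nat \<Rightarrow> 'b::zero poly set" where
  "Bp n = {r. \<forall>i\<ge>n. Polynomial.coeff r i = 0}"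

lemma Bp_eq: "Bp n = Poly ` {xs. set xs \<subseteq> UNIV \<and> length xs = n}"
proof (intro equalityI subsetI)
  fix r :: "'b::zero poly" assume r: "r \<in> Bp n"
  let ?xs = "map (Polynomial.coeff r) [0..<n]"
  have "Poly ?xs = r"
    by (rule poly_eqI) (use r in \<open>auto simp: Bp_def nth_default_def\<close>)
  thus "r \<in> Poly ` {xs. set xs \<subseteq> UNIV \<and> length xs = n}" by (intro image_eqI[of _ _ ?xs]) auto
next
  fix r :: "'b::zero poly" assume "r \<in> Poly ` {xs. set xs \<subseteq> UNIV \<and> length xs = n}"
  then obtain xs where "r = Poly xs" "length xs = n" by auto
  thus "r \<in> Bp n" by (auto simp: Bp_def nth_default_def)
qed

lemma inj_Poly_len: "inj_on Poly {xs. set xs \<subseteq> UNIV \<and> length xs = n}"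
proof (rule inj_onI)
  fix xs ys :: "'b::zero list"
  assume xs: "xs \<in> {xs. set xs \<subseteq> UNIV \<and> length xs = n}" and ys: "ys \<in> {xs. set xs \<subseteq> UNIV \<and> length xs = n}"
    and eq: "Poly xs = Poly ys"
  have "\<forall>i<n. xs ! i = ys ! i"
  proof (intro allI impI)
    fix i assume "i < n"
    have "Polynomial.coeff (Poly xs) i = Polynomial.coeff (Poly ys) i" using eq by simp
    thus "xs ! i = ys ! i" using xs ys \<open>i < n\<close> by (simp add: nth_default_def)
  qed
  thus "xs = ys" using xs ys by (simp add: list_eq_iff_nth_eq)
qed

lemma card_Bp: "card (Bp n :: 'b::{zero,finite} poly set) = CARD('b) ^ n"
  and finite_Bp: "finite (Bp n :: 'b::{zero,finite} poly set)"
proof -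
  have "card (Bp n :: 'b poly set) = card {xs :: 'b list. set xs \<subseteq> UNIV \<and> length xs = n}"
    unfolding Bp_eq by (rule card_image[OF inj_Poly_len])
  also have "\<dots> = CARD('b) ^ n" by (rule card_lists_length_eq) simp
  finally show "card (Bp n :: 'b poly set) = CARD('b) ^ n" .
  show "finite (Bp n :: 'b poly set)" unfolding Bp_eq
    by (rule finite_imageI) (rule finite_lists_length_eq, simp)
qed

definition Mo :: "nat \<Rightarrow> 'b::field poly set" where
  "Mo n = {h. Polynomial.lead_coeff h = 1 \<and> Polynomial.degree h = n}"

lemma Mo_eq: "Mo n = (\<lambda>r. Polynomial.monom 1 n + r) ` Bp n"
proof (intro equalityI subsetI)
  fix h :: "'b::field poly" assume h: "h \<in> Mo n"
  have "h - Polynomial.monom 1 n \<in> Bp n"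
    using h by (auto simp: Mo_def Bp_def coeff_eq_0 coeff_monom)
  moreover have "h = Polynomial.monom 1 n + (h - Polynomial.monom 1 n)" by simp
  ultimately show "h \<in> (\<lambda>r. Polynomial.monom 1 n + r) ` Bp n" by blast
next
  fix h :: "'b::field poly" assume "h \<in> (\<lambda>r. Polynomial.monom 1 n + r) ` Bp n"
  then obtain r where r: "r \<in> Bp n" "h = Polynomial.monom 1 n + r" by auto
  have c: "Polynomial.coeff h n = 1" using r by (simp add: Bp_def)
  have "\<forall>i>n. Polynomial.coeff h i = 0" using r by (auto simp: Bp_def coeff_monom)
  hence "Polynomial.degree h \<le> n" by (simp add: degree_le)
  moreover have "Polynomial.degree h \<ge> n" using c by (simp add: le_degree)
  ultimately have "Polynomial.degree h = n" by simp
  thus "h \<in> Mo n" using c by (simp add: Mo_def)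
qed

lemma card_Mo: "card (Mo n :: 'b::{field,finite} poly set) = CARD('b) ^ n"
  and finite_Mo: "finite (Mo n :: 'b::{field,finite} poly set)"
proof -
  have "inj_on (\<lambda>r::'b poly. Polynomial.monom 1 n + r) (Bp n)" by (rule inj_onI) simp
  thus "card (Mo n :: 'b poly set) = CARD('b) ^ n" unfolding Mo_eq by (simp add: card_image card_Bp)
  show "finite (Mo n :: 'b poly set)" unfolding Mo_eq by (simp add: finite_Bp)
qed

lemma monic_normalize:
  fixes a :: "'k::field_gcd poly"
  assumes "Polynomial.lead_coeff a = 1"
  shows "normalize a = a"
  using assms by (simp add: normalize_poly_eq_map_poly)

lemma normalize_monic:
  fixes a :: "'k::field_gcd poly"
  assumes "normalize a = a" "a \<noteq> 0"
  shows "Polynomial.lead_coeff a = 1"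
proof -
  have "Polynomial.lead_coeff a = normalize (Polynomial.lead_coeff a)"
    using coeff_normalize[of a "Polynomial.degree a"] assms(1) by simp
  also have "\<dots> = 1" using assms(2) by (simp add: normalize_1_iff dvd_field_iff)
  finally show ?thesis .
qed


lemma sp_unique:
  fixes a b :: "'k::field_gcd poly"
  assumes sf: "squarefree b" and la: "Polynomial.lead_coeff a = 1"
  shows "square_part (b * a^2) = a"
proof -
  have b0: "b \<noteq> 0" using sf by auto
  have a0: "a \<noteq> 0" using la by auto
  have "normalize (square_part (b * a^2)) = normalize a"
  proof (rule multiplicity_eq_imp_eq)
    show "square_part (b * a^2) \<noteq> 0" using b0 a0 by simp
    show "a \<noteq> 0" by (rule a0)
    fix p :: "'k poly" assume p: "Factorial_Ring.prime p"
    have "multiplicity p (square_part (b * a^2)) = multiplicity p (b * a^2) div 2"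
      by (rule prime_multiplicity_square_part[OF p])
    moreover have "multiplicity p (b * a^2) = multiplicity p b + 2 * multiplicity p a"
      using p b0 a0 by (simp add: prime_elem_multiplicity_mult_distrib prime_elem_multiplicity_power_distrib)
    moreover have "multiplicity p b \<le> 1" using sf b0 p squarefree_factorial_semiring'' by auto
    ultimately show "multiplicity p (square_part (b * a^2)) = multiplicity p a" by simp
  qed
  thus ?thesis by (simp add: monic_normalize la)
qed

definition SF :: "nat \<Rightarrow> 'b::field poly set" where
  "SF n = {h. Polynomial.lead_coeff h = 1 \<and> Polynomial.degree h = n \<and> sqf h}"

lemma SF_sub: "SF n \<subseteq> Mo n" by (auto simp: SF_def Mo_def)

lemma finite_SF: "finite (SF n :: 'b::{field,finite} poly set)"
  using finite_subset[OF SF_sub finite_Mo] .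

lemma Mo_lead: "a \<in> Mo k \<Longrightarrow> Polynomial.lead_coeff a = 1" unfolding Mo_def by blast
lemma SF_lead: "a \<in> SF k \<Longrightarrow> Polynomial.lead_coeff a = 1" unfolding SF_def by blast

lemma Mo_decomp:
  "card (Mo n :: 'k::{finite,field_gcd} poly set) =
     (\<Sum>k\<le>n div 2. card (Mo k :: 'k poly set) * card (SF (n - 2*k) :: 'k poly set))"
proof -
  define P where "P = (\<Union>k\<in>{..n div 2}. Mo k \<times> SF (n - 2*k) :: ('k poly \<times> 'k poly) set)"
  define D where "D = (\<lambda>(a,b). b * a^2 :: 'k poly)"
  have inj: "inj_on D P"
  proof (rule inj_onI)
    fix x y assume x: "x \<in> P" and y: "y \<in> P" and e: "D x = D y"
    obtain a b where ab: "x = (a,b)" by fastforce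
    obtain a' b' where ab': "y = (a',b')" by fastforce
    have la: "Polynomial.lead_coeff a = 1" "Polynomial.lead_coeff a' = 1"
      and sb: "squarefree b" "squarefree b'"
      using x y ab ab' by (auto simp: P_def Mo_def SF_def sqf_iff_squarefree)
    have "a = a'" using sp_unique[OF sb(1) la(1)] sp_unique[OF sb(2) la(2)] e ab ab'
      by (simp add: D_def)
    moreover have "a \<noteq> 0" using la by auto
    ultimately have "b = b'" using e ab ab' by (simp add: D_def)
    thus "x = y" using ab ab' \<open>a = a'\<close> by simp
  qed
  have img: "D ` P = Mo n"
  proof (intro equalityI subsetI)
    fix h :: "'k poly" assume "h \<in> D ` P"
    then obtain k a b where k: "k \<le> n div 2" and a: "a \<in> Mo k" and b: "b \<in> SF (n - 2*k)" and h: "h = b * a^2"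
      by (auto simp: P_def D_def)
    have "a \<noteq> 0" "b \<noteq> 0" using a b by (auto simp: Mo_def SF_def)
    hence "Polynomial.degree h = Polynomial.degree b + 2 * Polynomial.degree a"
      using h by (simp add: degree_mult_eq degree_power_eq)
    also have "\<dots> = n" using a b k by (auto simp: Mo_def SF_def)
    finally have dh: "Polynomial.degree h = n" .
    have "Polynomial.lead_coeff h = Polynomial.lead_coeff b * Polynomial.lead_coeff a ^ 2"
      unfolding h by (simp only: lead_coeff_mult lead_coeff_power)
    moreover have "Polynomial.lead_coeff a = 1" using a by (rule Mo_lead)
    moreover have "Polynomial.lead_coeff b = 1" using b by (rule SF_lead)
    ultimately have "Polynomial.lead_coeff h = 1" by simp
    thus "h \<in> Mo n" using dh by (simp add: Mo_def)
  next
    fix h :: "'k poly" assume h: "h \<in> Mo n"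
    have h0: "h \<noteq> 0" using h by (auto simp: Mo_def)
    define a where "a = square_part h"
    define b where "b = squarefree_part h"
    have hab: "h = b * a^2" unfolding a_def b_def by (rule squarefree_decompose)
    have a0: "a \<noteq> 0" using h0 by (simp add: a_def)
    have b0: "b \<noteq> 0" by (simp add: b_def)
    have la: "Polynomial.lead_coeff a = 1" using normalize_monic[of a] a0 by (simp add: a_def)
    have "Polynomial.lead_coeff h = Polynomial.lead_coeff b * Polynomial.lead_coeff a ^ 2"
      using hab by (simp add: lead_coeff_mult lead_coeff_power)
    hence lb: "Polynomial.lead_coeff b = 1" using h la by (simp add: Mo_def)
    have sb: "squarefree b" by (simp add: b_def)
    have dg: "n = Polynomial.degree b + 2 * Polynomial.degree a"
      using h hab a0 b0 by (simp add: Mo_def degree_mult_eq degree_power_eq)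
    have "(a, b) \<in> P" unfolding P_def
      using la lb sb dg by (auto simp: Mo_def SF_def sqf_iff_squarefree intro!: bexI[of _ "Polynomial.degree a"])
    thus "h \<in> D ` P" using hab by (auto simp: D_def)
  qed
  have "card (Mo n :: 'k poly set) = card P" using inj img by (metis card_image)
  also have "\<dots> = (\<Sum>k\<le>n div 2. card (Mo k \<times> SF (n - 2*k) :: ('k poly \<times> 'k poly) set))"
    unfolding P_def
  proof (rule card_UN_disjoint)
    show "finite {..n div 2}" by simp
    show "\<forall>i\<in>{..n div 2}. finite (Mo i \<times> SF (n - 2 * i) :: ('k poly \<times> 'k poly) set)"
      by (simp add: finite_Mo finite_SF)
    show "\<forall>i\<in>{..n div 2}. \<forall>j\<in>{..n div 2}. i \<noteq> j \<longrightarrow>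
       (Mo i \<times> SF (n - 2 * i)) \<inter> (Mo j \<times> SF (n - 2 * j)) = ({} :: ('k poly \<times> 'k poly) set)"
      by (auto simp: Mo_def)
  qed
  also have "\<dots> = (\<Sum>k\<le>n div 2. card (Mo k :: 'k poly set) * card (SF (n - 2*k) :: 'k poly set))"
    by (simp add: card_cartesian_product)
  finally show ?thesis .
qed

lemma SF_rec:
  "card (SF (n + 2) :: 'k::{finite,field_gcd} poly set) + CARD('k) ^ (n + 1) = CARD('k) ^ (n + 2)"
proof -
  let ?q = "CARD('k)"
  let ?s = "\<lambda>m. card (SF m :: 'k poly set)"
  have A: "?q ^ m = (\<Sum>k\<le>m div 2. ?q ^ k * ?s (m - 2*k))" for m
    using Mo_decomp[of m, where 'k='k] by (simp add: card_Mo)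
  have "?q ^ (n + 2) = (\<Sum>k\<le>Suc (n div 2). ?q ^ k * ?s (n + 2 - 2*k))"
    using A[of "n+2"] by simp
  also have "\<dots> = ?s (n + 2) + (\<Sum>k\<le>n div 2. ?q ^ Suc k * ?s (n + 2 - 2 * Suc k))"
    by (subst sum.atMost_Suc_shift) simp
  also have "(\<Sum>k\<le>n div 2. ?q ^ Suc k * ?s (n + 2 - 2 * Suc k)) = ?q * (\<Sum>k\<le>n div 2. ?q ^ k * ?s (n - 2*k))"
    by (simp add: sum_distrib_left mult.assoc)
  also have "\<dots> = ?q * ?q ^ n" using A[of n] by simp
  finally show ?thesis by simp
qed

lemma sqf_smult:
  fixes m :: "'b::field poly"
  assumes "c \<noteq> 0"
  shows "sqf (Polynomial.smult c m) \<longleftrightarrow> sqf m"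
proof
  assume s: "sqf (Polynomial.smult c m)"
  show "sqf m" unfolding sqf_def
  proof (intro conjI allI impI)
    show "m \<noteq> 0" using s by (auto simp: sqf_def)
    fix p g assume "m = p^2 * g"
    hence "Polynomial.smult c m = p^2 * Polynomial.smult c g" by simp
    thus "Polynomial.degree p = 0" using s unfolding sqf_def by blast
  qed
next
  assume s: "sqf m"
  show "sqf (Polynomial.smult c m)" unfolding sqf_def
  proof (intro conjI allI impI)
    show "Polynomial.smult c m \<noteq> 0" using s assms by (auto simp: sqf_def)
    fix p g assume "Polynomial.smult c m = p^2 * g"
    hence "Polynomial.smult (inverse c) (Polynomial.smult c m) = p^2 * Polynomial.smult (inverse c) g" by simp
    hence "m = p^2 * Polynomial.smult (inverse c) g" using assms by simp
    thus "Polynomial.degree p = 0" using s unfolding sqf_def by blast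
  qed
qed

lemma card_sqf_deg:
  "card {h :: 'b::{finite,field} poly. Polynomial.degree h = n \<and> sqf h} = (CARD('b) - 1) * card (SF n :: 'b poly set)"
proof -
  define D where "D = (\<lambda>(c,m). Polynomial.smult c m :: 'b poly)"
  have "bij_betw D ((UNIV - {0}) \<times> SF n) {h. Polynomial.degree h = n \<and> sqf h}"
  proof (rule bij_betw_imageI)
    show "inj_on D ((UNIV - {0}) \<times> SF n)"
    proof (rule inj_onI)
      fix x y assume x: "x \<in> (UNIV - {0}) \<times> SF n" and y: "y \<in> (UNIV - {0}) \<times> SF n" and e: "D x = D y"
      obtain c m where cm: "x = (c, m)" by fastforce
      obtain c' m' where cm': "y = (c', m')" by fastforce
      have l: "Polynomial.lead_coeff m = 1" "Polynomial.lead_coeff m' = 1" "c \<noteq> 0" "c' \<noteq> 0"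
        using x y cm cm' by (auto simp: SF_def)
      have "Polynomial.lead_coeff (Polynomial.smult c m) = Polynomial.lead_coeff (Polynomial.smult c' m')"
        using e cm cm' by (simp add: D_def)
      hence cc: "c = c'" using l by simp
      hence "Polynomial.smult (inverse c) (Polynomial.smult c m) = Polynomial.smult (inverse c) (Polynomial.smult c m')"
        using e cm cm' by (simp add: D_def)
      hence "m = m'" using l by simp
      thus "x = y" using cm cm' cc by simp
    qed
  next
    show "D ` ((UNIV - {0}) \<times> SF n) = {h. Polynomial.degree h = n \<and> sqf h}"
    proof (intro equalityI subsetI)
      fix h :: "'b poly" assume "h \<in> D ` ((UNIV - {0}) \<times> SF n)"
      then obtain c m where "c \<noteq> 0" "m \<in> SF n" "h = Polynomial.smult c m" by (auto simp: D_def)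
      thus "h \<in> {h. Polynomial.degree h = n \<and> sqf h}" by (auto simp: SF_def sqf_smult)
    next
      fix h :: "'b poly" assume h: "h \<in> {h. Polynomial.degree h = n \<and> sqf h}"
      define c where "c = Polynomial.lead_coeff h"
      have h0: "h \<noteq> 0" using h by (auto simp: sqf_def)
      have c0: "c \<noteq> 0" using h0 by (simp add: c_def)
      define m where "m = Polynomial.smult (inverse c) h"
      have "m \<in> SF n" using h c0 by (auto simp: SF_def m_def sqf_smult c_def)
      moreover have "h = D (c, m)" using c0 by (simp add: D_def m_def)
      ultimately show "h \<in> D ` ((UNIV - {0}) \<times> SF n)" using c0 by blast
    qed
  qed
  hence "card ((UNIV - {0::'b}) \<times> (SF n :: 'b poly set)) = card {h :: 'b poly. Polynomial.degree h = n \<and> sqf h}"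
    by (rule bij_betw_same_card)
  hence "card {h :: 'b poly. Polynomial.degree h = n \<and> sqf h} = card ((UNIV - {0::'b}) \<times> (SF n :: 'b poly set))"
    by simp
  also have "\<dots> = (CARD('b) - 1) * card (SF n :: 'b poly set)"
    by (simp add: card_cartesian_product card_Diff_singleton)
  finally show ?thesis .
qed


definition rh :: "('b::comm_ring_1 \<Rightarrow> 'c::comm_ring_1) \<Rightarrow> bool" where
  "rh f \<longleftrightarrow> f 0 = 0 \<and> f 1 = 1 \<and> (\<forall>x y. f (x + y) = f x + f y) \<and> (\<forall>x y. f (x * y) = f x * f y)"

lemma rh_sum: "rh f \<Longrightarrow> f (sum g A) = sum (\<lambda>x. f (g x)) A"
  by (induction A rule: infinite_finite_induct) (auto simp: rh_def)

lemma rh_of_nat: "rh f \<Longrightarrow> f (of_nat n) = of_nat n"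
  by (induction n) (auto simp: rh_def)

lemma coeff_mp: "rh f \<Longrightarrow> Polynomial.coeff (map_poly f p) n = f (Polynomial.coeff p n)"
  by (simp add: coeff_map_poly rh_def)

lemma mp_add: "rh f \<Longrightarrow> map_poly f (p + q) = map_poly f p + map_poly f q"
  by (rule poly_eqI) (simp add: coeff_mp rh_def)

lemma mp_mult: "rh f \<Longrightarrow> map_poly f (p * q) = map_poly f p * map_poly f q"
  by (rule poly_eqI) (simp add: coeff_mp coeff_mult rh_sum, simp add: rh_def)

lemma mp_one: "rh f \<Longrightarrow> map_poly f 1 = 1"
  by (simp add: rh_def)

lemma mp_power: "rh f \<Longrightarrow> map_poly f (p ^ n) = map_poly f p ^ n"
  by (induction n) (simp_all add: mp_one mp_mult)

lemma mp_pderiv: "rh f \<Longrightarrow> map_poly f (pderiv p) = pderiv (map_poly f p)"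
  by (rule poly_eqI) (simp add: coeff_mp coeff_pderiv, simp add: rh_def rh_of_nat)

lemma mp_inv: "rh f \<Longrightarrow> rh g \<Longrightarrow> (\<forall>x. g (f x) = x) \<Longrightarrow> map_poly g (map_poly f p) = p"
  by (rule poly_eqI) (simp add: coeff_mp)

lemma mp_degree: "rh f \<Longrightarrow> rh g \<Longrightarrow> (\<forall>x. g (f x) = x) \<Longrightarrow> Polynomial.degree (map_poly f p) = Polynomial.degree p"
proof (cases "p = 0")
  case False
  assume a: "rh f" "rh g" "\<forall>x. g (f x) = x"
  have "f (Polynomial.lead_coeff p) \<noteq> 0"
  proof
    assume "f (Polynomial.lead_coeff p) = 0"
    hence "g (f (Polynomial.lead_coeff p)) = 0" using a(2) by (simp add: rh_def)
    thus False using a(3) False by simp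
  qed
  thus ?thesis by (rule map_poly_degree_eq)
qed (simp)

lemma sqf_transfer:
  fixes f :: "'b::field \<Rightarrow> 'c::field"
  assumes f: "rh f" and g: "rh g" and gf: "\<forall>x. g (f x) = x" and fg: "\<forall>x. f (g x) = x"
  assumes s: "sqf (map_poly f h)"
  shows "sqf h"
  unfolding sqf_def
proof (intro conjI allI impI)
  show "h \<noteq> 0" using s f by (auto simp: sqf_def rh_def)
  fix p q assume "h = p^2 * q"
  hence "map_poly f h = (map_poly f p)^2 * map_poly f q" using f by (simp add: mp_mult mp_power)
  hence "Polynomial.degree (map_poly f p) = 0" using s unfolding sqf_def by blast
  thus "Polynomial.degree p = 0" using mp_degree[OF f g gf] by simp
qed

lemma sep_transfer:
  fixes f :: "'b::field \<Rightarrow> 'c::field"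
  assumes f: "rh f" and g: "rh g" and gf: "\<forall>x. g (f x) = x"
  assumes s: "sep (map_poly f h)"
  shows "sep h"
proof -
  obtain u v where "u * map_poly f h + v * pderiv (map_poly f h) = 1" using s by (auto simp: sep_def)
  hence "map_poly g (u * map_poly f h + v * pderiv (map_poly f h)) = 1" using g by (simp add: mp_one)
  hence "map_poly g u * h + map_poly g v * pderiv h = 1"
    using f g gf by (simp add: mp_add mp_mult mp_inv flip: mp_pderiv)
  thus ?thesis by (auto simp: sep_def)
qed


lemma rh_Abs: "rh (Abs_fw :: 'a::field \<Rightarrow> 'a fw)"
  by (simp add: rh_def Abs_fw_add Abs_fw_mult Abs_fw_0 Abs_fw_1)
lemma rh_Rep: "rh (Rep_fw :: 'a::field fw \<Rightarrow> 'a)"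
  by (simp add: rh_def Rep_fw_add Rep_fw_mult Rep_fw_0 Rep_fw_1)
lemma RA: "\<forall>x. Rep_fw (Abs_fw x) = x" by (simp add: Abs_fw_inverse)
lemma AR: "\<forall>x. Abs_fw (Rep_fw x) = x" by (simp add: Rep_fw_inverse)

lemma sqf_imp_sep:
  fixes h :: "'a::{finite,field} poly"
  assumes "sqf h" shows "sep h"
proof -
  have "sqf (map_poly Rep_fw (map_poly Abs_fw h))" unfolding mp_inv[OF rh_Abs rh_Rep RA] by (rule assms)
  hence "sqf (map_poly Abs_fw h)" by (rule sqf_transfer[OF rh_Rep rh_Abs AR RA])
  hence "squarefree (map_poly Abs_fw h)" by (simp add: sqf_iff_squarefree)
  hence "sep (map_poly Abs_fw h)" by (rule squarefree_imp_sep)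
  thus "sep h" by (rule sep_transfer[OF rh_Abs rh_Rep RA])
qed

lemma card_sqf_fw:
  "card {h :: 'a::{finite,field} poly. Polynomial.degree h = n \<and> sqf h} =
   card {h :: 'a fw poly. Polynomial.degree h = n \<and> sqf h}"
proof (rule bij_betw_same_card[of "map_poly Abs_fw"], rule bij_betw_imageI)
  show "inj_on (map_poly Abs_fw) {h :: 'a poly. Polynomial.degree h = n \<and> sqf h}"
  proof (rule inj_onI)
    fix x y :: "'a poly" assume "map_poly Abs_fw x = map_poly Abs_fw y"
    hence "map_poly Rep_fw (map_poly Abs_fw x) = map_poly Rep_fw (map_poly Abs_fw y)" by (rule arg_cong)
    thus "x = y" unfolding mp_inv[OF rh_Abs rh_Rep RA] .
  qed
  show "map_poly Abs_fw ` {h :: 'a poly. Polynomial.degree h = n \<and> sqf h} = {h. Polynomial.degree h = n \<and> sqf h}"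
  proof (intro equalityI subsetI)
    fix H :: "'a fw poly" assume "H \<in> map_poly Abs_fw ` {h :: 'a poly. Polynomial.degree h = n \<and> sqf h}"
    then obtain h :: "'a poly" where h: "Polynomial.degree h = n" "sqf h" "H = map_poly Abs_fw h" by auto
    have "sqf (map_poly Rep_fw H)" unfolding h(3) mp_inv[OF rh_Abs rh_Rep RA] by (rule h(2))
    hence "sqf H" by (rule sqf_transfer[OF rh_Rep rh_Abs AR RA])
    moreover have "Polynomial.degree H = n" unfolding h(3) mp_degree[OF rh_Abs rh_Rep RA] by (rule h(1))
    ultimately show "H \<in> {h. Polynomial.degree h = n \<and> sqf h}" by simp
  next
    fix H :: "'a fw poly" assume H: "H \<in> {h. Polynomial.degree h = n \<and> sqf h}"
    define h where "h = map_poly Rep_fw H"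
    have Hh: "H = map_poly Abs_fw h" unfolding h_def mp_inv[OF rh_Rep rh_Abs AR] by (rule refl)
    have "sqf (map_poly Abs_fw h)" using H unfolding Hh by simp
    hence "sqf h" by (rule sqf_transfer[OF rh_Abs rh_Rep RA AR])
    moreover have "Polynomial.degree (map_poly Abs_fw h) = n" using H Hh by simp
    hence "Polynomial.degree h = n" unfolding mp_degree[OF rh_Abs rh_Rep RA] .
    ultimately show "H \<in> map_poly Abs_fw ` {h :: 'a poly. Polynomial.degree h = n \<and> sqf h}" using Hh by blast
  qed
qed

lemma card_sqf_final:
  assumes "n \<ge> 2"
  shows "card {h :: 'a::{finite,field} poly. Polynomial.degree h = n \<and> sqf h} =
     (CARD('a) - 1) * (CARD('a) ^ n - CARD('a) ^ (n - 1))"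
proof -
  obtain m where m: "n = m + 2" using assms by (metis add.commute le_Suc_ex)
  have "card (SF (m + 2) :: 'a fw poly set) + CARD('a fw) ^ (m + 1) = CARD('a fw) ^ (m + 2)"
    by (rule SF_rec)
  hence "card (SF n :: 'a fw poly set) = CARD('a) ^ n - CARD('a) ^ (n - 1)"
    using m by (simp add: card_fw)
  have "card {h :: 'a poly. Polynomial.degree h = n \<and> sqf h} =
     card {h :: 'a fw poly. Polynomial.degree h = n \<and> sqf h}" by (rule card_sqf_fw)
  also have "\<dots> = (CARD('a fw) - 1) * card (SF n :: 'a fw poly set)" by (rule card_sqf_deg)
  finally show ?thesis using \<open>card (SF n :: 'a fw poly set) = _\<close> by (simp only: card_fw)
qed


lemma roots_card_nodouble:
  fixes H :: "'b::alg_closed_field poly"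
  assumes "H \<noteq> 0" "\<forall>r. \<not> [:-r,1:]^2 dvd H"
  shows "card {x. poly H x = 0} = Polynomial.degree H"
  using assms
proof (induction "Polynomial.degree H" arbitrary: H)
  case 0
  then obtain c where "H = [:c:]" by (metis degree_eq_zeroE)
  with 0 have "{x. poly H x = 0} = {}" by auto
  thus ?case using 0 by simp
next
  case (Suc n)
  then obtain r where r: "poly H r = 0" using alg_closed_imp_poly_has_root[of H] by auto
  then obtain K where K: "H = [:-r,1:] * K" using poly_eq_0_iff_dvd by (metis dvdE)
  have K0: "K \<noteq> 0" using K Suc.prems by auto
  have "Polynomial.degree ([:-r,1:] * K) = Polynomial.degree [:-r,1:] + Polynomial.degree K"
    by (rule degree_mult_eq) (simp_all add: K0)
  hence dK: "Polynomial.degree K = n" using K Suc.hyps(2) by simp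
  have nd: "\<forall>s. \<not> [:-s,1:]^2 dvd K" using Suc.prems(2) K by (metis dvd_mult)
  have rK: "poly K r \<noteq> 0"
  proof
    assume "poly K r = 0"
    then obtain M where "K = [:-r,1:] * M" using poly_eq_0_iff_dvd by (metis dvdE)
    hence "H = [:-r,1:]^2 * M" using K by (simp only: power2_eq_square mult.assoc)
    thus False using Suc.prems(2) by (metis dvd_triv_left)
  qed
  have "{x. poly H x = 0} = insert r {x. poly K x = 0}" using K by auto
  moreover have "finite {x. poly K x = 0}" using K0 poly_roots_finite by blast
  ultimately have "card {x. poly H x = 0} = Suc (card {x. poly K x = 0})" using rK by simp
  thus ?case using Suc.hyps(1)[OF dK[symmetric] K0 nd] Suc.hyps(2) dK by simp
qed

lemma roots_card_double:
  fixes H :: "'b::alg_closed_field poly"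
  assumes "H \<noteq> 0" "[:-r,1:]^2 dvd H"
  shows "card {x. poly H x = 0} < Polynomial.degree H"
proof -
  obtain M where M: "H = [:-r,1:]^2 * M" using assms(2) by (metis dvdE)
  define K where "K = [:-r,1:] * M"
  have HK: "H = [:-r,1:] * K" using M by (simp only: K_def power2_eq_square mult.assoc)
  have K0: "K \<noteq> 0" using HK assms(1) by auto
  have "{x. poly H x = 0} \<subseteq> {x. poly K x = 0}" using HK by (auto simp: K_def)
  hence "card {x. poly H x = 0} \<le> card {x. poly K x = 0}"
    using K0 poly_roots_finite card_mono by blast
  also have "\<dots> \<le> Polynomial.degree K" using K0 card_poly_roots_bound by blast
  also have "\<dots> < Polynomial.degree H"
  proof -
    have "Polynomial.degree ([:-r,1:] * K) = Polynomial.degree [:-r,1:] + Polynomial.degree K"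
      by (rule degree_mult_eq) (simp_all add: K0)
    thus ?thesis using HK by simp
  qed
  finally show ?thesis .
qed

lemma roots_card_iff:
  fixes H :: "'b::alg_closed_field poly"
  assumes "H \<noteq> 0"
  shows "card {x. poly H x = 0} = Polynomial.degree H \<longleftrightarrow> (\<forall>r. \<not> [:-r,1:]^2 dvd H)"
  using roots_card_nodouble[OF assms] roots_card_double[OF assms] by (metis less_irrefl)


lemma sep_nodouble:
  fixes h :: "'a::field poly"
  assumes "sep h"
  shows "\<not> [:-r,1:]^2 dvd TA h"
proof
  assume "[:-r,1:]^2 dvd TA h"
  then obtain K where K: "TA h = [:-r,1:]^2 * K" by (metis dvdE)
  define L where "L = [:-r,1:]"
  have L0: "poly L r = 0" by (simp add: L_def)
  have K': "TA h = L * L * K" using K by (simp only: L_def power2_eq_square)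
  have r1: "poly (TA h) r = 0" using K' L0 by simp
  have r2: "poly (pderiv (TA h)) r = 0" using K' L0 by (simp add: pderiv_mult)
  obtain u v where "u * h + v * pderiv h = 1" using assms by (auto simp: sep_def)
  hence "TA (u * h + v * pderiv h) = 1" by simp
  hence "poly (TA u * TA h + TA v * pderiv (TA h)) r = 1" by simp
  thus False using r1 r2 by simp
qed

lemma roots_iff_sqf:
  fixes h :: "'a::{finite,field} poly"
  assumes h0: "h \<noteq> 0"
  shows "card {x. poly (TA h) x = 0} = Polynomial.degree h \<longleftrightarrow> sqf h"
proof
  assume c: "card {x. poly (TA h) x = 0} = Polynomial.degree h"
  show "sqf h" unfolding sqf_def
  proof (intro conjI allI impI h0)
    fix p g assume pg: "h = p^2 * g"
    show "Polynomial.degree p = 0"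
    proof (rule ccontr)
      assume "Polynomial.degree p \<noteq> 0"
      hence "Polynomial.degree (TA p) > 0" by simp
      then obtain r where "poly (TA p) r = 0" using alg_closed_imp_poly_has_root by blast
      hence "[:-r,1:] dvd TA p" using poly_eq_0_iff_dvd by blast
      hence "[:-r,1:]^2 dvd (TA p)^2" by (rule dvd_power_same)
      also have "\<dots> dvd TA h" using pg by simp
      finally have "[:-r,1:]^2 dvd TA h" .
      hence "card {x. poly (TA h) x = 0} < Polynomial.degree (TA h)"
        by (intro roots_card_double) (simp_all add: h0)
      thus False using c by simp
    qed
  qed
next
  assume "sqf h"
  hence "sep h" by (rule sqf_imp_sep)
  hence "\<forall>r. \<not> [:-r,1:]^2 dvd TA h" using sep_nodouble by blast
  hence "card {x. poly (TA h) x = 0} = Polynomial.degree (TA h)"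
    by (intro roots_card_nodouble) (simp_all add: h0)
  thus "card {x. poly (TA h) x = 0} = Polynomial.degree h" by simp
qed


lemma finite_mono3: "finite (mono3 d)"
proof -
  have "mono3 d \<subseteq> {..d} \<times> {..d} \<times> {..d}" by (auto simp: mono3_def)
  thus ?thesis by (rule finite_subset) simp
qed

definition mon3 :: "'a::field \<times> 'a \<times> 'a \<Rightarrow> 'a \<times> 'a \<times> 'a \<Rightarrow> nat \<times> nat \<times> nat \<Rightarrow> 'a poly" where
  "mon3 u w m = (case m of (i,j,k) \<Rightarrow> [:fst u, fst w:]^i * [:fst (snd u), fst (snd w):]^j * [:snd (snd u), snd (snd w):]^k)"

definition restr :: "nat \<Rightarrow> 'a::field \<times> 'a \<times> 'a \<Rightarrow> 'a \<times> 'a \<times> 'a \<Rightarrow> (nat \<times> nat \<times> nat \<Rightarrow> 'a) \<Rightarrow> 'a poly" where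
  "restr d u w f = (\<Sum>m\<in>mono3 d. Polynomial.smult (f m) (mon3 u w m))"

definition PT :: "'a::field \<times> 'a \<times> 'a \<Rightarrow> 'a \<times> 'a \<times> 'a \<Rightarrow> 'a alg_closure \<Rightarrow> 'a alg_closure
   \<Rightarrow> 'a alg_closure \<times> 'a alg_closure \<times> 'a alg_closure" where
  "PT u w s t = (s * to_ac (fst u) + t * to_ac (fst w), s * to_ac (fst (snd u)) + t * to_ac (fst (snd w)),
                 s * to_ac (snd (snd u)) + t * to_ac (snd (snd w)))"

lemma TA_sum: "TA (sum g A) = (\<Sum>x\<in>A. TA (g x))"
  by (induction A rule: infinite_finite_induct) simp_all

lemma E1: "poly (TA (restr d u w f)) t = eval3 d f (PT u w 1 t)"
proof -
  have "poly (TA (restr d u w f)) t = (\<Sum>m\<in>mono3 d. poly (TA (Polynomial.smult (f m) (mon3 u w m))) t)"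
    unfolding restr_def TA_sum poly_sum ..
  also have "\<dots> = (\<Sum>(i,j,k)\<in>mono3 d. to_ac (f (i,j,k)) *
      (to_ac (fst u) + t * to_ac (fst w)) ^ i * (to_ac (fst (snd u)) + t * to_ac (fst (snd w))) ^ j *
      (to_ac (snd (snd u)) + t * to_ac (snd (snd w))) ^ k)"
    by (rule sum.cong) (auto simp: mon3_def mult.assoc)
  also have "\<dots> = eval3 d f (PT u w 1 t)" by (simp add: eval3_def PT_def)
  finally show ?thesis .
qed

lemma coeff_mult_top:
  fixes p q :: "'a::comm_semiring_1 poly"
  assumes "Polynomial.degree p \<le> m" "Polynomial.degree q \<le> n"
  shows "Polynomial.coeff (p * q) (m + n) = Polynomial.coeff p m * Polynomial.coeff q n"
proof -
  have "Polynomial.coeff (p * q) (m + n) = (\<Sum>i\<le>m + n. Polynomial.coeff p i * Polynomial.coeff q (m + n - i))"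
    by (rule coeff_mult)
  also have "\<dots> = (\<Sum>i\<in>{m}. Polynomial.coeff p i * Polynomial.coeff q (m + n - i))"
  proof (rule sum.mono_neutral_right)
    show "\<forall>i\<in>{..m + n} - {m}. Polynomial.coeff p i * Polynomial.coeff q (m + n - i) = 0"
    proof
      fix i assume i: "i \<in> {..m + n} - {m}"
      show "Polynomial.coeff p i * Polynomial.coeff q (m + n - i) = 0"
      proof (cases "i < m")
        case True
        hence "Polynomial.coeff q (m + n - i) = 0" using assms(2) by (intro coeff_eq_0) simp
        thus ?thesis by simp
      next
        case False
        hence "Polynomial.coeff p i = 0" using assms(1) i by (intro coeff_eq_0) auto
        thus ?thesis by simp
      qed
    qed
  qed auto
  finally show ?thesis by simp
qed

lemma lin_pow_top:
  "Polynomial.degree ([:a, b:] ^ n) \<le> n \<and> Polynomial.coeff ([:a, b::'a::comm_semiring_1:] ^ n) n = b ^ n"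
proof (induction n)
  case 0 thus ?case by simp
next
  case (Suc n)
  have d1: "Polynomial.degree [:a, b:] \<le> 1" by simp
  have "Polynomial.degree ([:a, b:] * [:a, b:] ^ n) \<le> Polynomial.degree [:a, b:] + Polynomial.degree ([:a, b:] ^ n)"
    by (rule degree_mult_le)
  also have "\<dots> \<le> 1 + n" using Suc.IH d1 by (intro add_le_mono) auto
  finally have "Polynomial.degree ([:a, b:] ^ Suc n) \<le> Suc n" by simp
  moreover have "Polynomial.coeff ([:a, b:] * [:a, b:] ^ n) (1 + n) = Polynomial.coeff [:a, b:] 1 * Polynomial.coeff ([:a, b:] ^ n) n"
    using Suc.IH d1 by (intro coeff_mult_top) auto
  ultimately show ?case using Suc.IH by simp
qed


lemma mon_top:
  assumes "m \<in> mono3 d"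
  shows "Polynomial.degree (mon3 u w m) \<le> d \<and>
    Polynomial.coeff (mon3 u w m) d = (case m of (i,j,k) \<Rightarrow> fst w ^ i * fst (snd w) ^ j * snd (snd w) ^ k)"
proof -
  obtain i j k where m: "m = (i,j,k)" by (cases m) auto
  have s: "i + j + k = d" using assms m by (simp add: mono3_def)
  note A = lin_pow_top[of "fst u" "fst w" i] and B = lin_pow_top[of "fst (snd u)" "fst (snd w)" j]
    and C = lin_pow_top[of "snd (snd u)" "snd (snd w)" k]
  have dAB: "Polynomial.degree ([:fst u, fst w:]^i * [:fst (snd u), fst (snd w):]^j) \<le> i + j"
    using A B by (meson add_le_mono degree_mult_le le_trans)
  have cAB: "Polynomial.coeff ([:fst u, fst w:]^i * [:fst (snd u), fst (snd w):]^j) (i + j) = fst w ^ i * fst (snd w) ^ j"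
    using A B by (simp add: coeff_mult_top)
  have "Polynomial.degree (mon3 u w m) \<le> i + j + k"
    unfolding m mon3_def using dAB C by (simp add: le_trans[OF degree_mult_le] add_le_mono)
  moreover have "Polynomial.coeff (mon3 u w m) (i + j + k) = fst w ^ i * fst (snd w) ^ j * snd (snd w) ^ k"
    unfolding m mon3_def using dAB cAB C by (simp add: coeff_mult_top)
  ultimately show ?thesis using s m by simp
qed

lemma E2: "to_ac (Polynomial.coeff (restr d u w f) d) = eval3 d f (PT u w 0 1)"
proof -
  have "Polynomial.coeff (restr d u w f) d = (\<Sum>m\<in>mono3 d. f m * Polynomial.coeff (mon3 u w m) d)"
    by (simp add: restr_def coeff_sum)
  also have "\<dots> = (\<Sum>m\<in>mono3 d. f m * (case m of (i,j,k) \<Rightarrow> fst w ^ i * fst (snd w) ^ j * snd (snd w) ^ k))"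
    by (rule sum.cong) (simp_all add: mon_top)
  finally have "to_ac (Polynomial.coeff (restr d u w f) d) =
     (\<Sum>m\<in>mono3 d. to_ac (f m * (case m of (i,j,k) \<Rightarrow> fst w ^ i * fst (snd w) ^ j * snd (snd w) ^ k)))"
    by (simp add: to_ac_sum)
  also have "\<dots> = (\<Sum>(i,j,k)\<in>mono3 d. to_ac (f (i,j,k)) * to_ac (fst w) ^ i * to_ac (fst (snd w)) ^ j * to_ac (snd (snd w)) ^ k)"
    by (rule sum.cong) (auto simp: mult.assoc)
  also have "\<dots> = eval3 d f (PT u w 0 1)" by (simp add: eval3_def PT_def)
  finally show ?thesis .
qed

lemma degree_restr: "Polynomial.degree (restr d u w f) \<le> d"
  unfolding restr_def
proof (rule degree_sum_le)
  fix m assume "m \<in> mono3 d"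
  thus "Polynomial.degree (Polynomial.smult (f m) (mon3 u w m)) \<le> d"
    using mon_top[of m d u w] degree_smult_le le_trans by blast
qed (simp add: finite_mono3)

lemma restr_add: "restr d u w (\<lambda>m. f m + g m) = restr d u w f + restr d u w g"
  by (simp add: restr_def sum.distrib smult_add_left)

lemma restr_diff: "restr d u w (\<lambda>m. f m - g m) = restr d u w f - restr d u w g"
  by (simp add: restr_def sum_subtractf smult_diff_left)

lemma restr_0: "restr d u w (\<lambda>m. 0) = 0"
  by (simp add: restr_def)


definition sc :: "'b::field \<Rightarrow> 'b \<times> 'b \<times> 'b \<Rightarrow> 'b \<times> 'b \<times> 'b" where
  "sc c p = (case p of (x,y,z) \<Rightarrow> (c*x, c*y, c*z))"

definition ld :: "'b::field \<times> 'b \<times> 'b \<Rightarrow> 'b" where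
  "ld p = (case p of (x,y,z) \<Rightarrow> if x \<noteq> 0 then x else if y \<noteq> 0 then y else z)"

definition nrm :: "'b::field \<times> 'b \<times> 'b \<Rightarrow> 'b \<times> 'b \<times> 'b" where
  "nrm p = sc (inverse (ld p)) p"

lemma ld_nz: "p \<noteq> (0,0,0) \<Longrightarrow> ld p \<noteq> 0"
  by (cases p) (auto simp: ld_def)

lemma ld_sc: "c \<noteq> 0 \<Longrightarrow> ld (sc c p) = c * ld p"
  by (cases p) (auto simp: ld_def sc_def)

lemma sc_sc: "sc a (sc b p) = sc (a * b) p"
  by (cases p) (simp add: sc_def mult.assoc)

lemma sc_1: "sc 1 p = p"
  by (cases p) (simp add: sc_def)

lemma sc_eq_0: "c \<noteq> 0 \<Longrightarrow> sc c p = (0,0,0) \<longleftrightarrow> p = (0,0,0)"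
  by (cases p) (auto simp: sc_def)

lemma proj_norm_nrm: "p \<noteq> (0,0,0) \<Longrightarrow> proj_norm (nrm p)"
  by (cases p) (auto simp: proj_norm_def nrm_def sc_def ld_def)

lemma proj_norm_ld: "proj_norm p \<Longrightarrow> ld p = 1"
  by (cases p) (auto simp: proj_norm_def ld_def)

lemma proj_norm_nz: "proj_norm p \<Longrightarrow> p \<noteq> (0,0,0)"
  by (cases p) (auto simp: proj_norm_def)

lemma nrm_id: "proj_norm p \<Longrightarrow> nrm p = p"
  by (simp add: nrm_def proj_norm_ld sc_1)

lemma nrm_sc: "c \<noteq> 0 \<Longrightarrow> p \<noteq> (0,0,0) \<Longrightarrow> nrm (sc c p) = nrm p"
proof -
  assume c: "c \<noteq> 0" and p: "p \<noteq> (0,0,0)"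
  have e: "inverse c * inverse (ld p) * c = inverse (ld p)" using c by simp
  show ?thesis using c by (simp add: nrm_def ld_sc sc_sc e)
qed

lemma nrm_is_sc: "p \<noteq> (0,0,0) \<Longrightarrow> \<exists>c. c \<noteq> 0 \<and> nrm p = sc c p"
  using ld_nz[of p] by (intro exI[of _ "inverse (ld p)"]) (simp add: nrm_def)

lemma nrm_eq: "p \<noteq> (0,0,0) \<Longrightarrow> q \<noteq> (0,0,0) \<Longrightarrow> nrm p = nrm q \<Longrightarrow> \<exists>c. c \<noteq> 0 \<and> q = sc c p"
proof -
  assume p: "p \<noteq> (0,0,0)" and q: "q \<noteq> (0,0,0)" and e: "nrm p = nrm q"
  have "sc (ld q) (nrm q) = q" using ld_nz[OF q] by (simp add: nrm_def sc_sc sc_1)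
  hence "q = sc (ld q) (nrm p)" using e by simp
  hence "q = sc (ld q * inverse (ld p)) p" by (simp add: nrm_def sc_sc)
  thus ?thesis using ld_nz[OF p] ld_nz[OF q] by (intro exI[of _ "ld q * inverse (ld p)"]) simp
qed

lemma eval3_sc: "eval3 d f (sc c p) = c ^ d * eval3 d f p"
proof -
  obtain x y z where p: "p = (x,y,z)" by (cases p) auto
  have "eval3 d f (sc c p) = (\<Sum>(i,j,k)\<in>mono3 d. to_ac (f (i,j,k)) * (c*x) ^ i * (c*y) ^ j * (c*z) ^ k)"
    by (simp add: eval3_def sc_def p)
  also have "\<dots> = (\<Sum>(i,j,k)\<in>mono3 d. c ^ d * (to_ac (f (i,j,k)) * x ^ i * y ^ j * z ^ k))"
  proof (rule sum.cong)
    fix m assume m: "m \<in> mono3 d"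
    obtain i j k where ijk: "m = (i,j,k)" by (cases m) auto
    have "d = i + j + k" using m ijk by (simp add: mono3_def)
    thus "(case m of (i,j,k) \<Rightarrow> to_ac (f (i,j,k)) * (c*x) ^ i * (c*y) ^ j * (c*z) ^ k) =
          (case m of (i,j,k) \<Rightarrow> c ^ d * (to_ac (f (i,j,k)) * x ^ i * y ^ j * z ^ k))"
      by (simp add: ijk power_mult_distrib power_add)
  qed simp
  also have "\<dots> = c ^ d * eval3 d f p"
    by (simp add: eval3_def p sum_distrib_left case_prod_beta)
  finally show ?thesis .
qed

definition onl :: "'a::field \<times> 'a \<times> 'a \<Rightarrow> 'a alg_closure \<times> 'a alg_closure \<times> 'a alg_closure \<Rightarrow> bool" where
  "onl l p = (case l of (a,b,c) \<Rightarrow> case p of (x,y,z) \<Rightarrow> to_ac a * x + to_ac b * y + to_ac c * z = 0)"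

lemma lcp_eq: "line_curve_pts d l f = {p. proj_norm p \<and> onl l p \<and> eval3 d f p = 0}"
  by (cases l) (auto simp: line_curve_pts_def onl_def)

lemma PT_sc: "sc c (PT u w s t) = PT u w (c * s) (c * t)"
  by (simp add: sc_def PT_def algebra_simps)

lemma PT_00: "PT u w 0 0 = (0,0,0)"
  by (simp add: PT_def)

locale geo =
  fixes l :: "'a::field \<times> 'a \<times> 'a" and u w :: "'a \<times> 'a \<times> 'a"
    and \<alpha> \<beta> :: "'a alg_closure \<times> 'a alg_closure \<times> 'a alg_closure \<Rightarrow> 'a alg_closure"
  assumes H1: "\<And>s t. \<alpha> (PT u w s t) = s" "\<And>s t. \<beta> (PT u w s t) = t"
    and H2: "\<And>p. onl l p \<Longrightarrow> p = PT u w (\<alpha> p) (\<beta> p)"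
    and H3: "\<And>s t. onl l (PT u w s t)"
begin

lemma PT_nz: "(s, t) \<noteq> (0, 0) \<Longrightarrow> PT u w s t \<noteq> (0,0,0)"
  by (metis H1 PT_00)

lemma PT_inj: "PT u w s t = PT u w s' t' \<longleftrightarrow> s = s' \<and> t = t'"
  by (metis H1)

definition Zs where "Zs d f = {t. eval3 d f (PT u w 1 t) = 0}"
definition Src where "Src d f = PT u w 1 ` Zs d f \<union> (if eval3 d f (PT u w 0 1) = 0 then {PT u w 0 1} else {})"

lemma lcp_img: "line_curve_pts d l f = nrm ` Src d f"
proof (intro equalityI subsetI)
  fix p assume p: "p \<in> line_curve_pts d l f"
  hence pn: "proj_norm p" and on: "onl l p" and ev: "eval3 d f p = 0" by (auto simp: lcp_eq)
  have p0: "p \<noteq> (0,0,0)" using pn by (rule proj_norm_nz)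
  define s where "s = \<alpha> p"
  define t where "t = \<beta> p"
  have pst: "p = PT u w s t" using H2[OF on] by (simp add: s_def t_def)
  show "p \<in> nrm ` Src d f"
  proof (cases "s = 0")
    case False
    have "p = sc s (PT u w 1 (t / s))" using False pst by (simp add: PT_sc)
    hence "eval3 d f p = s ^ d * eval3 d f (PT u w 1 (t / s))" by (simp add: eval3_sc)
    hence z: "t / s \<in> Zs d f" using ev False by (simp add: Zs_def)
    have "nrm p = nrm (PT u w 1 (t / s))" using \<open>p = sc s _\<close> False PT_nz[of 1 "t/s"] by (simp add: nrm_sc)
    hence "p = nrm (PT u w 1 (t / s))" using nrm_id[OF pn] by simp
    thus ?thesis using z by (auto simp: Src_def)
  next
    case True
    have t0: "t \<noteq> 0" using p0 pst True by (auto simp: PT_00)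
    have "p = sc t (PT u w 0 1)" using True pst by (simp add: PT_sc)
    hence "eval3 d f p = t ^ d * eval3 d f (PT u w 0 1)" by (simp add: eval3_sc)
    hence z: "eval3 d f (PT u w 0 1) = 0" using ev t0 by simp
    have "nrm p = nrm (PT u w 0 1)" using \<open>p = sc t _\<close> t0 PT_nz[of 0 1] by (simp add: nrm_sc)
    hence "p = nrm (PT u w 0 1)" using nrm_id[OF pn] by simp
    thus ?thesis using z by (auto simp: Src_def)
  qed
next
  fix p assume "p \<in> nrm ` Src d f"
  then obtain s t where st: "p = nrm (PT u w s t)" "(s, t) \<noteq> (0,0)" "eval3 d f (PT u w s t) = 0"
    by (auto simp: Src_def Zs_def split: if_splits)
  have nz: "PT u w s t \<noteq> (0,0,0)" using PT_nz[OF st(2)] .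
  obtain c where c: "c \<noteq> 0" "p = sc c (PT u w s t)" using nrm_is_sc[OF nz] st(1) by auto
  have "proj_norm p" using proj_norm_nrm[OF nz] st(1) by simp
  moreover have "onl l p" using c H3 by (simp add: PT_sc)
  moreover have "eval3 d f p = 0" using c st(3) by (simp add: eval3_sc)
  ultimately show "p \<in> line_curve_pts d l f" by (simp add: lcp_eq)
qed

lemma inj_nrm_Src: "inj_on nrm (Src d f)"
proof (rule inj_onI)
  fix x y assume x: "x \<in> Src d f" and y: "y \<in> Src d f" and e: "nrm x = nrm y"
  obtain s t where xs: "x = PT u w s t" "s = 1 \<or> (s = 0 \<and> t = 1)" using x by (auto simp: Src_def split: if_splits)
  obtain s' t' where ys: "y = PT u w s' t'" "s' = 1 \<or> (s' = 0 \<and> t' = 1)" using y by (auto simp: Src_def split: if_splits)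
  have "x \<noteq> (0,0,0)" "y \<noteq> (0,0,0)" using xs ys PT_nz by auto
  then obtain c where c: "c \<noteq> 0" "y = sc c x" using nrm_eq e by blast
  hence "PT u w s' t' = PT u w (c * s) (c * t)" using xs ys by (simp add: PT_sc)
  hence "s' = c * s" "t' = c * t" using PT_inj by auto
  thus "x = y" using xs(2) ys(2) c(1) xs(1) ys(1) by auto
qed

lemma card_lcp:
  "finite (line_curve_pts d l f) \<longleftrightarrow> finite (Zs d f)"
  "finite (Zs d f) \<Longrightarrow> card (line_curve_pts d l f) = card (Zs d f) + (if eval3 d f (PT u w 0 1) = 0 then 1 else 0)"
proof -
  have inj1: "inj (PT u w 1)" by (rule injI) (simp add: PT_inj)
  have disj: "PT u w 0 1 \<notin> PT u w 1 ` Zs d f" by (auto simp: PT_inj)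
  have "finite (line_curve_pts d l f) \<longleftrightarrow> finite (Src d f)"
    unfolding lcp_img using inj_nrm_Src finite_image_iff by blast
  also have "\<dots> \<longleftrightarrow> finite (Zs d f)"
    using inj1 by (auto simp: Src_def finite_image_iff inj_on_subset)
  finally show "finite (line_curve_pts d l f) \<longleftrightarrow> finite (Zs d f)" .
  assume fz: "finite (Zs d f)"
  have "card (line_curve_pts d l f) = card (Src d f)"
    unfolding lcp_img by (rule card_image[OF inj_nrm_Src])
  also have "\<dots> = card (Zs d f) + (if eval3 d f (PT u w 0 1) = 0 then 1 else 0)"
    using fz disj inj1 by (auto simp: Src_def card_image inj_on_subset)
  finally show "card (line_curve_pts d l f) = card (Zs d f) + (if eval3 d f (PT u w 0 1) = 0 then 1 else 0)" .
qed

end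


definition Gs :: "nat \<Rightarrow> 'b::field poly set" where
  "Gs d = {h. sqf h \<and> (Polynomial.degree h = d \<or> Polynomial.degree h = d - 1)}"

locale geof = geo l u w \<alpha> \<beta> for l :: "'a::{finite,field} \<times> 'a \<times> 'a" and u w \<alpha> \<beta>
begin

lemma Zs_eq: "Zs d f = {t. poly (TA (restr d u w f)) t = 0}"
  by (simp add: Zs_def E1)

lemma e_eq: "eval3 d f (PT u w 0 1) = 0 \<longleftrightarrow> Polynomial.coeff (restr d u w f) d = 0"
  by (simp flip: E2)

lemma transverse_iff:
  assumes d: "d \<ge> 2"
  shows "transverse d l f \<longleftrightarrow> restr d u w f \<in> Gs d"
proof (cases "restr d u w f = 0")
  case True
  hence "Zs d f = UNIV" by (simp add: Zs_eq)
  hence "\<not> finite (line_curve_pts d l f)" using card_lcp(1)[of d f] alg_closed_infinite by simp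
  moreover have "restr d u w f \<notin> Gs d" using True by (simp add: Gs_def sqf_def)
  ultimately show ?thesis by (simp add: transverse_def)
next
  case False
  define h where "h = restr d u w f"
  have h0: "h \<noteq> 0" using False by (simp add: h_def)
  have fin: "finite (Zs d f)" unfolding Zs_eq h_def[symmetric] using h0 poly_roots_finite[of "TA h"] by simp
  have cb: "card (Zs d f) \<le> Polynomial.degree h"
    unfolding Zs_eq h_def[symmetric] using card_poly_roots_bound[of "TA h"] h0 by simp
  have dh: "Polynomial.degree h \<le> d" unfolding h_def by (rule degree_restr)
  have ri: "card (Zs d f) = Polynomial.degree h \<longleftrightarrow> sqf h"
    unfolding Zs_eq h_def[symmetric] by (rule roots_iff_sqf[OF h0])
  have tr: "transverse d l f \<longleftrightarrow> card (Zs d f) + (if Polynomial.coeff h d = 0 then 1 else 0) = d"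
    unfolding transverse_def using card_lcp[of d f] fin e_eq[of d f] by (simp add: h_def)
  show ?thesis
  proof (cases "Polynomial.coeff h d = 0")
    case False
    hence "d \<le> Polynomial.degree h" by (rule le_degree)
    hence "Polynomial.degree h = d" using dh by simp
    thus ?thesis using tr ri False d by (auto simp: Gs_def h_def[symmetric])
  next
    case True
    have "Polynomial.degree h \<noteq> d" using True h0 by auto
    hence "Polynomial.degree h \<le> d - 1" using dh by simp
    thus ?thesis using tr ri True d cb by (auto simp: Gs_def h_def[symmetric])
  qed
qed

end


lemma fiber_card:
  fixes A :: "('m \<Rightarrow> 'x::ab_group_add) set" and \<phi> :: "('m \<Rightarrow> 'x) \<Rightarrow> 'y::ab_group_add"
  assumes fin: "finite A"
    and cl1: "\<And>f g. f \<in> A \<Longrightarrow> g \<in> A \<Longrightarrow> (\<lambda>m. f m + g m) \<in> A"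
    and cl2: "\<And>f g. f \<in> A \<Longrightarrow> g \<in> A \<Longrightarrow> (\<lambda>m. f m - g m) \<in> A"
    and add: "\<And>f g. \<phi> (\<lambda>m. f m + g m) = \<phi> f + \<phi> g"
    and S: "S \<subseteq> \<phi> ` A"
  shows "card {f\<in>A. \<phi> f \<in> S} = card S * card {f\<in>A. \<phi> f = 0}"
proof -
  have finS: "finite S" using S fin finite_surj by blast
  have eq: "{f\<in>A. \<phi> f \<in> S} = (\<Union>s\<in>S. {f\<in>A. \<phi> f = s})" by auto
  have fib: "card {f\<in>A. \<phi> f = s} = card {f\<in>A. \<phi> f = 0}" if s: "s \<in> S" for s
  proof -
    obtain a where a: "a \<in> A" "\<phi> a = s" using s S by auto
    have sub: "\<phi> (\<lambda>m. f m - a m) = \<phi> f - s" for f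
    proof -
      have "\<phi> f = \<phi> (\<lambda>m. (f m - a m) + a m)" by simp
      also have "\<dots> = \<phi> (\<lambda>m. f m - a m) + \<phi> a" by (rule add)
      finally show ?thesis using a(2) by (simp add: algebra_simps)
    qed
    have "bij_betw (\<lambda>g m. g m + a m) {f\<in>A. \<phi> f = 0} {f\<in>A. \<phi> f = s}"
    proof (rule bij_betw_byWitness[where f' = "\<lambda>g m. g m - a m"])
      show "\<forall>x\<in>{f \<in> A. \<phi> f = 0}. (\<lambda>m. (x m + a m) - a m) = x" by simp
      show "\<forall>y\<in>{f \<in> A. \<phi> f = s}. (\<lambda>m. (y m - a m) + a m) = y" by simp
      show "(\<lambda>g m. g m + a m) ` {f \<in> A. \<phi> f = 0} \<subseteq> {f \<in> A. \<phi> f = s}"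
      proof
        fix y assume "y \<in> (\<lambda>g m. g m + a m) ` {f \<in> A. \<phi> f = 0}"
        then obtain g where g: "g \<in> A" "\<phi> g = 0" "y = (\<lambda>m. g m + a m)" by blast
        have "y \<in> A" using cl1[OF g(1) a(1)] g(3) by simp
        moreover have "\<phi> y = s" using add[of g a] g a by simp
        ultimately show "y \<in> {f \<in> A. \<phi> f = s}" by simp
      qed
      show "(\<lambda>g m. g m - a m) ` {f \<in> A. \<phi> f = s} \<subseteq> {f \<in> A. \<phi> f = 0}"
      proof
        fix y assume "y \<in> (\<lambda>g m. g m - a m) ` {f \<in> A. \<phi> f = s}"
        then obtain g where g: "g \<in> A" "\<phi> g = s" "y = (\<lambda>m. g m - a m)" by blast
        have "y \<in> A" using cl2[OF g(1) a(1)] g(3) by simp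
        moreover have "\<phi> y = 0" using sub[of g] g by simp
        ultimately show "y \<in> {f \<in> A. \<phi> f = 0}" by simp
      qed
    qed
    hence "card {f\<in>A. \<phi> f = 0} = card {f\<in>A. \<phi> f = s}" by (rule bij_betw_same_card)
    thus ?thesis by (rule sym)
  qed
  have "card {f\<in>A. \<phi> f \<in> S} = (\<Sum>s\<in>S. card {f\<in>A. \<phi> f = s})"
    unfolding eq
  proof (rule card_UN_disjoint)
    show "finite S" by (rule finS)
    show "\<forall>i\<in>S. finite {f \<in> A. \<phi> f = i}" using fin by simp
    show "\<forall>i\<in>S. \<forall>j\<in>S. i \<noteq> j \<longrightarrow> {f \<in> A. \<phi> f = i} \<inter> {f \<in> A. \<phi> f = j} = {}" by blast
  qed
  also have "\<dots> = (\<Sum>s\<in>S. card {f\<in>A. \<phi> f = 0})" by (rule sum.cong) (simp_all add: fib)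
  also have "\<dots> = card S * card {f\<in>A. \<phi> f = 0}" by simp
  finally show ?thesis .
qed


lemma finite_hom_forms: "finite (hom_forms d :: ((nat \<times> nat \<times> nat) \<Rightarrow> 'a::{finite,field}) set)"
proof -
  let ?E = "\<lambda>g. \<lambda>m. if m \<in> mono3 d then g m else (0::'a)"
  have "hom_forms d \<subseteq> ?E ` (PiE (mono3 d) (\<lambda>_. UNIV))"
  proof
    fix f :: "nat \<times> nat \<times> nat \<Rightarrow> 'a" assume f: "f \<in> hom_forms d"
    have "f = ?E (restrict f (mono3 d))" using f by (auto simp: hom_forms_def)
    moreover have "restrict f (mono3 d) \<in> PiE (mono3 d) (\<lambda>_. UNIV)" by simp
    ultimately show "f \<in> ?E ` (PiE (mono3 d) (\<lambda>_. UNIV))" by blast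
  qed
  moreover have "finite (PiE (mono3 d) (\<lambda>_. UNIV :: 'a set))" by (rule finite_PiE) (simp_all add: finite_mono3)
  ultimately show ?thesis using finite_subset by blast
qed

lemma arith_final:
  fixes q :: real
  assumes "q > 0"
  shows "(q^(e+4) - (q-1)*((q^(e+3) - q^(e+2)) + (q^(e+2) - q^(e+1)))) / q^(e+4) = 1/q + 1/q^2 - 1/q^3"
proof -
  define r where "r = q^(e+1)"
  have r: "q^(e+2) = r * q" "q^(e+3) = r * q^2" "q^(e+4) = r * q^3"
    by (simp_all add: r_def power_add eval_nat_numeral)
  have r0: "r > 0" using assms by (simp add: r_def)
  have "(q^(e+4) - (q-1)*((q^(e+3) - q^(e+2)) + (q^(e+2) - q^(e+1)))) = r * (q^2 + q - 1)"
    unfolding r r_def[symmetric] by (simp add: algebra_simps power2_eq_square power3_eq_cube)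
  hence "(q^(e+4) - (q-1)*((q^(e+3) - q^(e+2)) + (q^(e+2) - q^(e+1)))) / q^(e+4) = (q^2 + q - 1) / q^3"
    using r0 unfolding r by simp
  also have "\<dots> = 1/q + 1/q^2 - 1/q^3" using assms by (simp add: field_simps power2_eq_square power3_eq_cube)
  finally show ?thesis .
qed


lemma Bp_iff: "h \<in> Bp (Suc d) \<longleftrightarrow> Polynomial.degree h \<le> d"
  by (auto simp: Bp_def coeff_eq_0 intro: degree_le)

lemma card_ge1: "CARD('a::{finite,field}) \<ge> 1"
  using finite_UNIV_card_ge_0[where 'a='a] by simp

context geof
begin

lemma nt_eq:
  assumes d: "d \<ge> 2"
  shows "nontransverse_set l \<inter> hom_forms d = {f\<in>hom_forms d. restr d u w f \<in> Bp (Suc d) - Gs d}"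
proof (intro equalityI subsetI)
  fix f assume f: "f \<in> nontransverse_set l \<inter> hom_forms d"
  then obtain d' where d': "d' \<ge> 1" "f \<in> hom_forms d'" "\<not> transverse d' l f" by (auto simp: nontransverse_set_def)
  have fd: "f \<in> hom_forms d" using f by simp
  have "\<not> transverse d l f"
  proof (cases "d' = d")
    case True thus ?thesis using d' by simp
  next
    case False
    have f0: "f = (\<lambda>m. 0)"
    proof
      fix m show "f m = 0"
      proof (rule ccontr)
        assume "f m \<noteq> 0"
        hence "m \<in> mono3 d" "m \<in> mono3 d'" using fd d'(2) unfolding hom_forms_def by blast+
        thus False using False by (auto simp: mono3_def)
      qed
    qed
    have "restr d u w f \<notin> Gs d" using f0 by (simp add: restr_0 Gs_def sqf_def)
    thus ?thesis using transverse_iff[OF d] by simp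
  qed
  hence "restr d u w f \<notin> Gs d" using transverse_iff[OF d] by simp
  moreover have "restr d u w f \<in> Bp (Suc d)" by (simp add: Bp_iff degree_restr)
  ultimately show "f \<in> {f\<in>hom_forms d. restr d u w f \<in> Bp (Suc d) - Gs d}" using fd by simp
next
  fix f assume f: "f \<in> {f\<in>hom_forms d. restr d u w f \<in> Bp (Suc d) - Gs d}"
  hence "\<not> transverse d l f" using transverse_iff[OF d] by simp
  moreover have "d \<ge> 1" using d by simp
  ultimately show "f \<in> nontransverse_set l \<inter> hom_forms d" using f by (auto simp: nontransverse_set_def)
qed

lemma mu_formula:
  assumes d: "d \<ge> 3"
    and surj: "\<And>h. h \<in> Bp (Suc d) \<Longrightarrow> \<exists>f\<in>hom_forms d. restr d u w f = h"
  shows "mu_d d (nontransverse_set l) = 1 / real CARD('a) + 1 / real CARD('a) ^ 2 - 1 / real CARD('a) ^ 3"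
proof -
  let ?HF = "hom_forms d :: (nat \<times> nat \<times> nat \<Rightarrow> 'a) set"
  let ?\<phi> = "restr d u w :: (nat \<times> nat \<times> nat \<Rightarrow> 'a) \<Rightarrow> 'a poly"
  let ?K = "card {f\<in>?HF. ?\<phi> f = 0}"
  have img: "?\<phi> ` ?HF = Bp (Suc d)"
  proof (intro equalityI subsetI)
    fix h :: "'a poly" assume "h \<in> ?\<phi> ` ?HF" thus "h \<in> Bp (Suc d)" by (auto simp: Bp_iff degree_restr)
  next
    fix h :: "'a poly" assume "h \<in> Bp (Suc d)" thus "h \<in> ?\<phi> ` ?HF" using surj by blast
  qed
  have cl1: "\<And>f g. f \<in> ?HF \<Longrightarrow> g \<in> ?HF \<Longrightarrow> (\<lambda>m. f m + g m) \<in> ?HF" by (auto simp: hom_forms_def)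
  have cl2: "\<And>f g. f \<in> ?HF \<Longrightarrow> g \<in> ?HF \<Longrightarrow> (\<lambda>m. f m - g m) \<in> ?HF" by (auto simp: hom_forms_def)
  have add: "\<And>f g. ?\<phi> (\<lambda>m. f m + g m) = ?\<phi> f + ?\<phi> g" by (rule restr_add)
  note fc = fiber_card[where A = ?HF and \<phi> = ?\<phi>, OF finite_hom_forms]
  have GB: "Gs d \<subseteq> Bp (Suc d)" by (auto simp: Gs_def Bp_iff)
  have c1: "card (nontransverse_set l \<inter> ?HF) = card (Bp (Suc d) - Gs d :: 'a poly set) * ?K"
  proof -
    have d2: "d \<ge> 2" using d by simp
    show ?thesis unfolding nt_eq[OF d2]
      apply (rule fc)
      apply (auto simp: hom_forms_def)[2]
       apply (rule restr_add)
      using img by auto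
  qed
  have "{f\<in>?HF. ?\<phi> f \<in> Bp (Suc d)} = ?HF" using img by blast
  hence "card ?HF = card {f\<in>?HF. ?\<phi> f \<in> Bp (Suc d)}" by simp
  also have "\<dots> = card (Bp (Suc d) :: 'a poly set) * ?K"
    apply (rule fc)
    apply (auto simp: hom_forms_def)[2]
     apply (rule restr_add)
    using img by auto
  finally have c2: "card ?HF = card (Bp (Suc d) :: 'a poly set) * ?K" .
  have K0: "?K > 0"
  proof -
    have "(\<lambda>m. 0) \<in> {f\<in>?HF. ?\<phi> f = 0}" by (simp add: hom_forms_def restr_0)
    moreover have "finite {f\<in>?HF. ?\<phi> f = 0}" by (rule finite_subset[OF _ finite_hom_forms]) auto
    ultimately show ?thesis by (auto simp: card_gt_0_iff)
  qed
  obtain e where e: "d = e + 3" using d by (metis add.commute le_Suc_ex)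
  let ?q = "CARD('a)"
  have q1: "?q \<ge> 1" by (rule card_ge1)
  have Gs_split: "Gs d = {h :: 'a poly. Polynomial.degree h = d \<and> sqf h} \<union> {h. Polynomial.degree h = d - 1 \<and> sqf h}"
    by (auto simp: Gs_def)
  have finB: "finite (Bp (Suc d) :: 'a poly set)" by (rule finite_Bp)
  have finG: "finite (Gs d :: 'a poly set)" using finite_subset[OF GB finB] .
  have fin1: "finite {h :: 'a poly. Polynomial.degree h = d \<and> sqf h}"
    by (rule finite_subset[OF _ finG]) (auto simp: Gs_def)
  have fin2: "finite {h :: 'a poly. Polynomial.degree h = d - 1 \<and> sqf h}"
    by (rule finite_subset[OF _ finG]) (auto simp: Gs_def)
  have dis: "{h :: 'a poly. Polynomial.degree h = d \<and> sqf h} \<inter> {h. Polynomial.degree h = d - 1 \<and> sqf h} = {}"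
    using d by auto
  have "card (Gs d :: 'a poly set) = card {h :: 'a poly. Polynomial.degree h = d \<and> sqf h} + card {h :: 'a poly. Polynomial.degree h = d - 1 \<and> sqf h}"
    unfolding Gs_split by (rule card_Un_disjoint[OF fin1 fin2 dis])
  also have "card {h :: 'a poly. Polynomial.degree h = d \<and> sqf h} = (?q - 1) * (?q ^ (e+3) - ?q ^ (e+2))"
    using card_sqf_final[of d, where 'a='a] e by simp
  also have "card {h :: 'a poly. Polynomial.degree h = d - 1 \<and> sqf h} = (?q - 1) * (?q ^ (e+2) - ?q ^ (e+1))"
    using card_sqf_final[of "d - 1", where 'a='a] e by simp
  finally have cG: "card (Gs d :: 'a poly set) = (?q - 1) * (?q ^ (e+3) - ?q ^ (e+2)) + (?q - 1) * (?q ^ (e+2) - ?q ^ (e+1))" .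
  have cB: "card (Bp (Suc d) :: 'a poly set) = ?q ^ (e+4)" using card_Bp[of "Suc d", where 'b='a] e by (simp add: add.commute)
  have cBG: "card (Bp (Suc d) - Gs d :: 'a poly set) = card (Bp (Suc d) :: 'a poly set) - card (Gs d :: 'a poly set)"
    by (rule card_Diff_subset[OF finG GB])
  have le: "card (Gs d :: 'a poly set) \<le> card (Bp (Suc d) :: 'a poly set)" by (rule card_mono[OF finB GB])
  define qr where "qr = real ?q"
  have qr0: "qr > 0" using q1 by (simp add: qr_def)
  have p1: "?q ^ (e+2) \<le> ?q ^ (e+3)" "?q ^ (e+1) \<le> ?q ^ (e+2)" using q1 by (intro power_increasing; simp)+
  have r1: "real (?q - 1) = qr - 1" using q1 by (simp add: qr_def of_nat_diff)
  have r2: "real (?q ^ (e+3) - ?q ^ (e+2)) = qr^(e+3) - qr^(e+2)" using p1(1) by (simp add: qr_def of_nat_diff)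
  have r3: "real (?q ^ (e+2) - ?q ^ (e+1)) = qr^(e+2) - qr^(e+1)" using p1(2) by (simp add: qr_def of_nat_diff)
  have rG: "real (card (Gs d :: 'a poly set)) = (qr - 1) * ((qr^(e+3) - qr^(e+2)) + (qr^(e+2) - qr^(e+1)))"
    unfolding cG of_nat_add of_nat_mult r1 r2 r3 by (simp add: algebra_simps)
  have rB: "real (card (Bp (Suc d) :: 'a poly set)) = qr^(e+4)" unfolding cB by (simp add: qr_def)
  have rBG: "real (card (Bp (Suc d) - Gs d :: 'a poly set)) = qr^(e+4) - (qr - 1) * ((qr^(e+3) - qr^(e+2)) + (qr^(e+2) - qr^(e+1)))"
    unfolding cBG of_nat_diff[OF le] rB rG ..
  have "mu_d d (nontransverse_set l) = real (card (nontransverse_set l \<inter> ?HF)) / real (card ?HF)"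
    by (simp add: mu_d_def)
  also have "\<dots> = real (card (Bp (Suc d) - Gs d :: 'a poly set)) / real (card (Bp (Suc d) :: 'a poly set))"
    using c1 c2 K0 by simp
  also have "\<dots> = (qr^(e+4) - (qr-1)*((qr^(e+3) - qr^(e+2)) + (qr^(e+2) - qr^(e+1)))) / qr^(e+4)"
    unfolding rBG rB ..
  also have "\<dots> = 1/qr + 1/qr^2 - 1/qr^3" by (rule arith_final[OF qr0])
  finally show ?thesis by (simp add: qr_def)
qed

end


lemma lin01: "[:0, 1:] ^ j = Polynomial.monom (1::'a::comm_semiring_1) j"
  by (simp add: monom_altdef)

lemma lin01': "pCons 0 1 ^ j = Polynomial.monom (1::'a::comm_semiring_1) j"
  using lin01[of j] by (simp add: one_pCons)

lemma surj_gen: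
  fixes \<tau> :: "nat \<Rightarrow> nat \<times> nat \<times> nat" and h :: "'a::field poly"
  assumes t1: "\<And>j. j \<le> d \<Longrightarrow> \<tau> j \<in> mono3 d" and t2: "inj_on \<tau> {..d}"
    and t3: "\<And>j. j \<le> d \<Longrightarrow> mon3 u w (\<tau> j) = Polynomial.monom 1 j"
    and h: "h \<in> Bp (Suc d)"
  shows "\<exists>f\<in>hom_forms d. restr d u w f = h"
proof -
  define f where "f = (\<lambda>m. if m \<in> \<tau> ` {..d} then Polynomial.coeff h (the_inv_into {..d} \<tau> m) else 0)"
  have fH: "f \<in> hom_forms d" using t1 by (auto simp: f_def hom_forms_def)
  have "restr d u w f = (\<Sum>m\<in>\<tau> ` {..d}. Polynomial.smult (f m) (mon3 u w m))"
    unfolding restr_def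
    by (rule sum.mono_neutral_right) (auto simp: finite_mono3 t1 f_def)
  also have "\<dots> = (\<Sum>j\<le>d. Polynomial.smult (f (\<tau> j)) (mon3 u w (\<tau> j)))"
    by (rule sum.reindex[OF t2, unfolded comp_def])
  also have "\<dots> = (\<Sum>j\<le>d. Polynomial.monom (Polynomial.coeff h j) j)"
    by (rule sum.cong) (simp_all add: f_def t3 smult_monom the_inv_into_f_f[OF t2])
  also have "\<dots> = h" using h by (intro poly_as_sum_of_monoms') (simp add: Bp_iff)
  finally show ?thesis using fH by blast
qed

lemma main_all:
  fixes l :: "'a::{finite,field} \<times> 'a \<times> 'a"
  assumes l0: "l \<noteq> (0, 0, 0)" and d: "d \<ge> 3"
  shows "mu_d d (nontransverse_set l) = 1 / real CARD('a) + 1 / real CARD('a) ^ 2 - 1 / real CARD('a) ^ 3"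
proof -
  obtain a b c where l: "l = (a, b, c)" by (cases l) auto
  show ?thesis
  proof (cases "c = 0")
    case False
    define u where "u = (1::'a, 0::'a, - a / c)"
    define w where "w = (0::'a, 1::'a, - b / c)"
    define \<alpha> where "\<alpha> = (\<lambda>p :: 'a alg_closure \<times> 'a alg_closure \<times> 'a alg_closure. fst p)"
    define \<beta> where "\<beta> = (\<lambda>p :: 'a alg_closure \<times> 'a alg_closure \<times> 'a alg_closure. fst (snd p))"
    have C: "to_ac c \<noteq> 0" using False by simp
    interpret geof l u w \<alpha> \<beta>
    proof
      show "\<alpha> (PT u w s t) = s" "\<beta> (PT u w s t) = t" for s t by (simp_all add: \<alpha>_def \<beta>_def PT_def u_def w_def)
      show "p = PT u w (\<alpha> p) (\<beta> p)" if "onl l p" for p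
      proof -
        obtain x y z where p: "p = (x, y, z)" by (cases p) auto
        have eq: "to_ac a * x + to_ac b * y + to_ac c * z = 0" using that by (simp add: onl_def l p)
        have "to_ac c * z = - (to_ac a * x + to_ac b * y)" using eq by (simp add: eq_neg_iff_add_eq_0 algebra_simps)
        hence "z = x * (- to_ac a / to_ac c) + y * (- to_ac b / to_ac c)" using C by (simp add: field_simps)
        thus ?thesis by (simp add: p PT_def u_def w_def \<alpha>_def \<beta>_def)
      qed
      show "onl l (PT u w s t)" for s t
        using C by (simp add: onl_def l PT_def u_def w_def field_simps)
    qed
    show ?thesis
    proof (rule mu_formula[OF d])
      fix h :: "'a poly" assume hB: "h \<in> Bp (Suc d)"
      show "\<exists>f\<in>hom_forms d. restr d u w f = h"
        by (rule surj_gen[where \<tau> = "\<lambda>j. (d - j, j, 0)", OF _ _ _ hB])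
           (auto simp: mono3_def inj_on_def mon3_def u_def w_def lin01 lin01' one_pCons[symmetric])
    qed
  next
    case c0: True
    show ?thesis
    proof (cases "b = 0")
      case False
      define u where "u = (1::'a, - a / b, 0::'a)"
      define w where "w = (0::'a, 0::'a, 1::'a)"
      define \<alpha> where "\<alpha> = (\<lambda>p :: 'a alg_closure \<times> 'a alg_closure \<times> 'a alg_closure. fst p)"
      define \<beta> where "\<beta> = (\<lambda>p :: 'a alg_closure \<times> 'a alg_closure \<times> 'a alg_closure. snd (snd p))"
      have B: "to_ac b \<noteq> 0" using False by simp
      interpret geof l u w \<alpha> \<beta>
      proof
        show "\<alpha> (PT u w s t) = s" "\<beta> (PT u w s t) = t" for s t by (simp_all add: \<alpha>_def \<beta>_def PT_def u_def w_def)
        show "p = PT u w (\<alpha> p) (\<beta> p)" if "onl l p" for p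
        proof -
          obtain x y z where p: "p = (x, y, z)" by (cases p) auto
          have eq: "to_ac a * x + to_ac b * y = 0" using that c0 by (simp add: onl_def l p)
          have "to_ac b * y = - (to_ac a * x)" using eq by (simp add: eq_neg_iff_add_eq_0 algebra_simps)
          hence "y = x * (- to_ac a / to_ac b)" using B by (simp add: field_simps)
          thus ?thesis by (simp add: p PT_def u_def w_def \<alpha>_def \<beta>_def)
        qed
        show "onl l (PT u w s t)" for s t
          using B c0 by (simp add: onl_def l PT_def u_def w_def field_simps)
      qed
      show ?thesis
      proof (rule mu_formula[OF d])
        fix h :: "'a poly" assume hB: "h \<in> Bp (Suc d)"
        show "\<exists>f\<in>hom_forms d. restr d u w f = h"
          by (rule surj_gen[where \<tau> = "\<lambda>j. (d - j, 0, j)", OF _ _ _ hB])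
             (auto simp: mono3_def inj_on_def mon3_def u_def w_def lin01 lin01' one_pCons[symmetric])
      qed
    next
      case b0: True
      have a0: "a \<noteq> 0" using l0 l c0 b0 by auto
      define u where "u = (0::'a, 1::'a, 0::'a)"
      define w where "w = (0::'a, 0::'a, 1::'a)"
      define \<alpha> where "\<alpha> = (\<lambda>p :: 'a alg_closure \<times> 'a alg_closure \<times> 'a alg_closure. fst (snd p))"
      define \<beta> where "\<beta> = (\<lambda>p :: 'a alg_closure \<times> 'a alg_closure \<times> 'a alg_closure. snd (snd p))"
      have A: "to_ac a \<noteq> 0" using a0 by simp
      interpret geof l u w \<alpha> \<beta>
      proof
        show "\<alpha> (PT u w s t) = s" "\<beta> (PT u w s t) = t" for s t by (simp_all add: \<alpha>_def \<beta>_def PT_def u_def w_def)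
        show "p = PT u w (\<alpha> p) (\<beta> p)" if "onl l p" for p
          using that A c0 b0 by (cases p) (auto simp: onl_def l PT_def u_def w_def \<alpha>_def \<beta>_def)
        show "onl l (PT u w s t)" for s t
          using c0 b0 by (simp add: onl_def l PT_def u_def w_def)
      qed
      show ?thesis
      proof (rule mu_formula[OF d])
        fix h :: "'a poly" assume hB: "h \<in> Bp (Suc d)"
        show "\<exists>f\<in>hom_forms d. restr d u w f = h"
          by (rule surj_gen[where \<tau> = "\<lambda>j. (0, d - j, j)", OF _ _ _ hB])
             (auto simp: mono3_def inj_on_def mon3_def u_def w_def lin01 lin01' one_pCons[symmetric])
      qed
    qed
  qed
qed

theorem lemma4p3:
  fixes l :: "'a::{finite,field} \<times> 'a \<times> 'a"
  assumes "l \<noteq> (0, 0, 0)"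
  defines "q \<equiv> real CARD('a)"
  shows "(\<forall>d\<ge>3. mu_d d (nontransverse_set l) = 1/q + 1/q^2 - 1/q^3)
       \<and> (\<lambda>d. mu_d d (nontransverse_set l)) \<longlonglongrightarrow> 1/q + 1/q^2 - 1/q^3"
proof
  show A: "\<forall>d\<ge>3. mu_d d (nontransverse_set l) = 1/q + 1/q^2 - 1/q^3"
    using main_all[OF assms(1)] by (simp add: q_def)
  show "(\<lambda>d. mu_d d (nontransverse_set l)) \<longlonglongrightarrow> 1/q + 1/q^2 - 1/q^3"
  proof (rule tendsto_eventually)
    show "\<forall>\<^sub>F d in sequentially. mu_d d (nontransverse_set l) = 1/q + 1/q^2 - 1/q^3"
      using A by (intro eventually_sequentiallyI[of 3]) simp
  qed
qed


end
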